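(* Under the standing assumptions below, let $(\hat\nu,(\hat v^i)_{i\in\mathbb N})$ be the mean-field game Nash equilibrium of the infinite-player game, $\hat v^{-i}=(\hat v^1,\dots,\hat v^{i-1},\hat v^{i+1},\dots,\hat v^N)$, and let $\mathcal U_b\subset\mathcal U$ be any subclass containing all $\hat v^i$, $i\in\mathbb N$, with $\sup_{u\in\mathcal U_b}\|u\|_{2,T}^2<\infty$. Then there is a constant $C>0$ independent of $N$ and $i$ such that for all $N\ge2$ and $1\le i\le N$, $$J^{i,N}(\hat v^i;\hat v^{-i})\le\sup_{u\in\mathcal U_b}J^{i,N}(u;\hat v^{-i})\le J^{i,N}(\hat v^i;\hat v^{-i})+C\big(h(N)^{1/2}\vee N^{-1}\big).$$
   Context: Fix $T>0$ and a filtered probability space $(\Omega,\mathcal F,\mathbb F=(\mathcal F_t)_{0\le t\le T},\mathbb P)$ satisfying the usual conditions. On $L^2([0,T],\mathbb R)$, $\langle f,g\rangle_{L^2}=\int_0^Tf(s)g(s)\,ds$. A kernel $G\in L^2([0,T]^2,\mathbb R)$ induces the integral operator $(\boldsymbol Gf)(s)=\int_0^TG(s,u)f(u)\,du$; $\boldsymbol G^*$ is the adjoint operator; $\mathrm{id}$ is the identity. A measurable kernel $G$ is Volterra if $G(t,s)=0$ whenever $s\ge t$; it is nonnegative definite if $\int_0^T\int_0^T(G(t,s)+G(s,t))f(s)f(t)\,ds\,dt\ge0$ for all $f\in L^2([0,T],\mathbb R)$. The class $\mathcal G$ consists of the nonnegative definite Volterra kernels $G:[0,T]^2\to\mathbb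 R_+$ with $\sup_{t\le T}\int_0^T|G(t,s)|^2ds+\sup_{s\le T}\int_0^T|G(t,s)|^2dt<\infty$; an admissible Volterra operator is one induced by a kernel in $\mathcal G$. $\mathcal U$ is the set of $\mathbb F$-progressively measurable real processes $u$ with $\|u\|_{2,T}:=(\int_0^T\mathbb E[u_t^2]dt)^{1/2}<\infty$. $\boldsymbol A_1,\boldsymbol A_3$ are admissible Volterra operators; $\boldsymbol A_2=\lambda\,\mathrm{id}+\hat{\boldsymbol A}_2$ with $\lambda>0$ and $\hat{\boldsymbol A}_2$ admissible Volterra. $b^0,b^1,b^2,\dots$ are $\mathbb F$-progressively measurable processes with $\int_0^T\mathbb E[(b^i_s)^2]ds<\infty$, $c^1,c^2,\dots$ integrable random variables, and there are an $\mathbb F$-progressively measurable $b^\infty\in L^2(\Omega\times[0,T])$ and a bounded $h:\mathbb R_+\to\mathbb R_+$ with $h(x)\to0$ as $x\to\infty$ such that $\sup_{t\le T}\mathbb E[(\frac1N\sum_{i=1}^Nb^i_t-b^\infty_t)^2]\le h(N)$ for all $N\ge1$. $N$-player objective: for $u^1,\dots,u^N\in\mathcal U$, $\bar u=\frac1N\sum_ju^j$, $J^{i,N}(u^i;u^{-i})=\mathbb E[-\langle\bar u,\boldsymbol A_1\bar u\rangle_{L^2}-\langle u^i,\boldsymbol A_2u^i\rangle_{L^2}-\langle u^i,(\boldsymbol A_3+\boldsymbol A_3^* )\bar u\rangle_{L^2}+\langle b^i,u^i\rangle_{L^2}+\langle b^0,\bar u\rangle_{L^2}+c^i]$. Infinite-player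 game: $J^{i,\infty}(v^i;\nu)=\mathbb E[-\langle\nu,\boldsymbol A_1\nu\rangle_{L^2}-\langle v^i,\boldsymbol A_2v^i\rangle_{L^2}-\langle v^i,(\boldsymbol A_3+\boldsymbol A_3^* )\nu\rangle_{L^2}+\langle b^i,v^i\rangle_{L^2}+\langle b^0,\nu\rangle_{L^2}+c^i]$; a mean-field game Nash equilibrium is $(\hat\nu,(\hat v^i)_{i\in\mathbb N})\subset\mathcal U$ such that each $\hat v^i$ maximizes $v\mapsto J^{i,\infty}(v;\hat\nu)$ over $\mathcal U$ and $\lim_{N\to\infty}\sup_{t\le T}\mathbb E[(\frac1N\sum_{i=1}^N\hat v^i_t-\hat\nu_t)^2]=0$. *)

theory Defs
  imports "HOL-Probability.Probability"
begin

text \<open>Time horizon [0,T]; processes are functions u :: real => 'a => real (time, outcome).\<close>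

definition usual_filtration :: "'a measure \<Rightarrow> real \<Rightarrow> (real \<Rightarrow> 'a measure) \<Rightarrow> bool" where
  "usual_filtration M T F \<longleftrightarrow>
     (\<forall>t\<in>{0..T}. space (F t) = space M \<and> sets (F t) \<subseteq> sets M) \<and>
     (\<forall>s\<in>{0..T}. \<forall>t\<in>{0..T}. s \<le> t \<longrightarrow> sets (F s) \<subseteq> sets (F t)) \<and>
     (\<forall>t\<in>{0..<T}. sets (F t) = (\<Inter>s\<in>{t<..T}. sets (F s))) \<and>
     (\<forall>A. A \<subseteq> space M \<and> (\<exists>B\<in>sets M. A \<subseteq> B \<and> emeasure M B = 0) \<longrightarrow> A \<in> sets (F 0))"

definition prog_meas :: "real \<Rightarrow> (real \<Rightarrow> 'a measure) \<Rightarrow> (real \<Rightarrow> 'a \<Rightarrow> real) \<Rightarrow> bool" where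
  "prog_meas T F u \<longleftrightarrow>
     (\<forall>t\<in>{0..T}. (\<lambda>(s,\<omega>). u s \<omega>) \<in> borel_measurable (restrict_space borel {0..t} \<Otimes>\<^sub>M F t))"

definition sqnorm2T :: "'a measure \<Rightarrow> real \<Rightarrow> (real \<Rightarrow> 'a \<Rightarrow> real) \<Rightarrow> ennreal" where
  "sqnorm2T M T u = (\<integral>\<^sup>+ t\<in>{0..T}. (\<integral>\<^sup>+ \<omega>. ennreal ((u t \<omega>)\<^sup>2) \<partial>M) \<partial>lborel)"

definition admissible_controls :: "'a measure \<Rightarrow> real \<Rightarrow> (real \<Rightarrow> 'a measure) \<Rightarrow> (real \<Rightarrow> 'a \<Rightarrow> real) set" where
  "admissible_controls M T F = {u. prog_meas T F u \<and> sqnorm2T M T u < \<infinity>}"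

definition l2inner :: "real \<Rightarrow> (real \<Rightarrow> real) \<Rightarrow> (real \<Rightarrow> real) \<Rightarrow> real" where
  "l2inner T f g = (LINT s:{0..T}|lborel. f s * g s)"

definition kop :: "real \<Rightarrow> (real \<Rightarrow> real \<Rightarrow> real) \<Rightarrow> (real \<Rightarrow> real) \<Rightarrow> (real \<Rightarrow> real)" where
  "kop T G f = (\<lambda>s. LINT u:{0..T}|lborel. G s u * f u)"

definition adj_kernel :: "(real \<Rightarrow> real \<Rightarrow> real) \<Rightarrow> (real \<Rightarrow> real \<Rightarrow> real)" where
  "adj_kernel G = (\<lambda>s u. G u s)"

definition L2_fun :: "real \<Rightarrow> (real \<Rightarrow> real) \<Rightarrow> bool" where
  "L2_fun T f \<longleftrightarrow> f \<in> borel_measurable lborel \<and> set_integrable lborel {0..T} (\<lambda>s. (f s)\<^sup>2)"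

definition volterra :: "real \<Rightarrow> (real \<Rightarrow> real \<Rightarrow> real) \<Rightarrow> bool" where
  "volterra T G \<longleftrightarrow> (\<forall>t\<in>{0..T}. \<forall>s\<in>{0..T}. t \<le> s \<longrightarrow> G t s = 0)"

definition nonneg_definite :: "real \<Rightarrow> (real \<Rightarrow> real \<Rightarrow> real) \<Rightarrow> bool" where
  "nonneg_definite T G \<longleftrightarrow> (\<forall>f. L2_fun T f \<longrightarrow>
     0 \<le> (LINT t:{0..T}|lborel. (LINT s:{0..T}|lborel. (G t s + G s t) * f s * f t)))"

definition admissible_kernel :: "real \<Rightarrow> (real \<Rightarrow> real \<Rightarrow> real) \<Rightarrow> bool" where
  "admissible_kernel T G \<longleftrightarrow>
     (\<lambda>(t,s). G t s) \<in> borel_measurable borel \<and>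
     (\<integral>\<^sup>+ p\<in>{0..T}\<times>{0..T}. ennreal ((G (fst p) (snd p))\<^sup>2) \<partial>lborel) < \<infinity> \<and>
     volterra T G \<and> nonneg_definite T G \<and>
     (\<forall>t\<in>{0..T}. \<forall>s\<in>{0..T}. 0 \<le> G t s) \<and>
     (\<exists>K. \<forall>t\<in>{0..T}. (\<integral>\<^sup>+ s\<in>{0..T}. ennreal ((G t s)\<^sup>2) \<partial>lborel) \<le> ennreal K) \<and>
     (\<exists>K. \<forall>s\<in>{0..T}. (\<integral>\<^sup>+ t\<in>{0..T}. ennreal ((G t s)\<^sup>2) \<partial>lborel) \<le> ennreal K)"

text \<open>Generic objective: player control u, aggregate (mean) control m, own signal bi,
  common signal b0, constant ci; A2 = lam id + A2h.\<close>
definition Jobj :: "'a measure \<Rightarrow> real \<Rightarrow> (real \<Rightarrow> real \<Rightarrow> real) \<Rightarrow> real \<Rightarrow> (real \<Rightarrow> real \<Rightarrow> real)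
   \<Rightarrow> (real \<Rightarrow> real \<Rightarrow> real) \<Rightarrow> (real \<Rightarrow> 'a \<Rightarrow> real) \<Rightarrow> (real \<Rightarrow> 'a \<Rightarrow> real) \<Rightarrow> ('a \<Rightarrow> real)
   \<Rightarrow> (real \<Rightarrow> 'a \<Rightarrow> real) \<Rightarrow> (real \<Rightarrow> 'a \<Rightarrow> real) \<Rightarrow> real" where
  "Jobj M T A1 lam A2h A3 b0 bi ci u m = (\<integral>\<omega>.
      (let uw = (\<lambda>t. u t \<omega>); mw = (\<lambda>t. m t \<omega>) in
        - l2inner T mw (kop T A1 mw)
        - (lam * l2inner T uw uw + l2inner T uw (kop T A2h uw))
        - l2inner T uw (\<lambda>t. kop T A3 mw t + kop T (adj_kernel A3) mw t)
        + l2inner T (\<lambda>t. bi t \<omega>) uw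
        + l2inner T (\<lambda>t. b0 t \<omega>) mw
        + ci \<omega>) \<partial>M)"

definition JN :: "'a measure \<Rightarrow> real \<Rightarrow> (real \<Rightarrow> real \<Rightarrow> real) \<Rightarrow> real \<Rightarrow> (real \<Rightarrow> real \<Rightarrow> real)
   \<Rightarrow> (real \<Rightarrow> real \<Rightarrow> real) \<Rightarrow> (nat \<Rightarrow> real \<Rightarrow> 'a \<Rightarrow> real) \<Rightarrow> (nat \<Rightarrow> 'a \<Rightarrow> real)
   \<Rightarrow> nat \<Rightarrow> nat \<Rightarrow> (real \<Rightarrow> 'a \<Rightarrow> real) \<Rightarrow> (nat \<Rightarrow> real \<Rightarrow> 'a \<Rightarrow> real) \<Rightarrow> real" where
  "JN M T A1 lam A2h A3 b c N i u v =
     Jobj M T A1 lam A2h A3 (b 0) (b i) (c i) u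
       (\<lambda>t \<omega>. (u t \<omega> + (\<Sum>j\<in>{1..N}-{i}. v j t \<omega>)) / real N)"

definition Jinf :: "'a measure \<Rightarrow> real \<Rightarrow> (real \<Rightarrow> real \<Rightarrow> real) \<Rightarrow> real \<Rightarrow> (real \<Rightarrow> real \<Rightarrow> real)
   \<Rightarrow> (real \<Rightarrow> real \<Rightarrow> real) \<Rightarrow> (nat \<Rightarrow> real \<Rightarrow> 'a \<Rightarrow> real) \<Rightarrow> (nat \<Rightarrow> 'a \<Rightarrow> real)
   \<Rightarrow> nat \<Rightarrow> (real \<Rightarrow> 'a \<Rightarrow> real) \<Rightarrow> (real \<Rightarrow> 'a \<Rightarrow> real) \<Rightarrow> real" where
  "Jinf M T A1 lam A2h A3 b c i v nu = Jobj M T A1 lam A2h A3 (b 0) (b i) (c i) v nu"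

definition mfg_nash :: "'a measure \<Rightarrow> real \<Rightarrow> (real \<Rightarrow> 'a measure) \<Rightarrow> (real \<Rightarrow> real \<Rightarrow> real) \<Rightarrow> real
   \<Rightarrow> (real \<Rightarrow> real \<Rightarrow> real) \<Rightarrow> (real \<Rightarrow> real \<Rightarrow> real) \<Rightarrow> (nat \<Rightarrow> real \<Rightarrow> 'a \<Rightarrow> real)
   \<Rightarrow> (nat \<Rightarrow> 'a \<Rightarrow> real) \<Rightarrow> (real \<Rightarrow> 'a \<Rightarrow> real) \<Rightarrow> (nat \<Rightarrow> real \<Rightarrow> 'a \<Rightarrow> real) \<Rightarrow> bool" where
  "mfg_nash M T F A1 lam A2h A3 b c nu v \<longleftrightarrow>
     nu \<in> admissible_controls M T F \<and>
     (\<forall>i\<ge>1. v i \<in> admissible_controls M T F) \<and>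
     (\<forall>i\<ge>1. \<forall>w\<in>admissible_controls M T F.
        Jinf M T A1 lam A2h A3 b c i w nu \<le> Jinf M T A1 lam A2h A3 b c i (v i) nu) \<and>
     ((\<lambda>N. SUP t\<in>{0..T}. \<integral>\<^sup>+ \<omega>. ennreal (((\<Sum>j\<in>{1..N}. v j t \<omega>) / real N - nu t \<omega>)\<^sup>2) \<partial>M)
        \<longlonglongrightarrow> 0)"

end

theory Submission
  imports Defs
begin
lemma abs_prod_amgm:
  fixes x y c :: real assumes c: "c > 0"
  shows "\<bar>x * y\<bar> \<le> (c * x\<^sup>2 + y\<^sup>2 / c) / 2"
proof -
  have "0 \<le> (c * \<bar>x\<bar> - \<bar>y\<bar>)\<^sup>2" by simp
  hence A: "2 * c * \<bar>x * y\<bar> \<le> c\<^sup>2 * x\<^sup>2 + y\<^sup>2"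
    by (simp add: power2_eq_square algebra_simps abs_mult)
  have "(c * x\<^sup>2 + y\<^sup>2 / c) / 2 = (c\<^sup>2 * x\<^sup>2 + y\<^sup>2) / (2 * c)" using c
    by (simp add: field_simps power2_eq_square)
  moreover have "\<bar>x * y\<bar> = (2 * c * \<bar>x * y\<bar>) / (2 * c)" using c by simp
  ultimately show ?thesis using A c by (metis divide_right_mono less_eq_real_def zero_le_mult_iff zero_le_numeral)
qed

lemma amgm_bound:
  fixes p q z :: real
  assumes p: "p \<ge> 0" and q: "q \<ge> 0" and H: "\<And>c. c > 0 \<Longrightarrow> z \<le> (c * p + q / c) / 2"
  shows "z \<le> sqrt (p * q)"
proof (cases "p > 0 \<and> q > 0")
  case True
  define c where "c = sqrt q / sqrt p"
  have c: "c > 0" using True by (simp add: c_def)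
  have sp: "sqrt p * sqrt p = p" "sqrt q * sqrt q = q" using p q by simp_all
  have "c * p = sqrt q * sqrt p" using True sp
    by (simp add: c_def field_simps)
  moreover have "q / c = sqrt q * sqrt p" using True sp
    by (simp add: c_def field_simps)
  ultimately have "z \<le> sqrt q * sqrt p" using H[OF c] by (simp add: mult.commute)
  thus ?thesis by (simp add: real_sqrt_mult mult.commute)
next
  case False
  hence "p = 0 \<or> q = 0" using p q by linarith
  thus ?thesis
  proof
    assume p0: "p = 0"
    show ?thesis
    proof (rule ccontr)
      assume "\<not> ?thesis"
      hence z: "z > 0" using p0 by simp
      have cp: "q / z + 1 > 0" using z q by (smt (verit) divide_nonneg_pos)
      have "z \<le> q / (q / z + 1) / 2" using H[OF cp] p0 by simp
      also have "\<dots> < z" using z q by (simp add: field_simps add_nonneg_pos mult_pos_pos)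
      finally show False by simp
    qed
  next
    assume q0: "q = 0"
    show ?thesis
    proof (rule ccontr)
      assume "\<not> ?thesis"
      hence z: "z > 0" using q0 by simp
      have "z \<le> (z / (p + 1)) * p / 2" using H[of "z/(p+1)"] q0 z p by simp
      also have "\<dots> < z" using z p by (simp add: field_simps add_nonneg_pos mult_pos_pos)
      finally show False by simp
    qed
  qed
qed

definition ind :: "real \<Rightarrow> (real \<Rightarrow> real) \<Rightarrow> real \<Rightarrow> real" where
  "ind T f = (\<lambda>s. indicator {0..T} s * f s)"

definition L2 :: "real \<Rightarrow> (real \<Rightarrow> real) \<Rightarrow> bool" where
  "L2 T f \<longleftrightarrow> ind T f \<in> borel_measurable borel \<and> integrable lborel (\<lambda>s. (ind T f s)\<^sup>2)"

lemma l2inner_eq: "l2inner T f g = (\<integral>s. ind T f s * ind T g s \<partial>lborel)"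
  unfolding l2inner_def set_lebesgue_integral_def ind_def
  by (rule Bochner_Integration.integral_cong) (auto split: split_indicator)

lemma l2inner_cong:
  "(\<And>s. s \<in> {0..T} \<Longrightarrow> f s = f' s) \<Longrightarrow> (\<And>s. s \<in> {0..T} \<Longrightarrow> g s = g' s) \<Longrightarrow>
   l2inner T f g = l2inner T f' g'"
  unfolding l2inner_def by (rule set_lebesgue_integral_cong) auto

lemma ind_lin: "ind T (\<lambda>s. a * f s + b * g s) = (\<lambda>s. a * ind T f s + b * ind T g s)"
  by (auto simp: ind_def algebra_simps)

lemma L2_meas: "L2 T f \<Longrightarrow> ind T f \<in> borel_measurable lborel"
  unfolding L2_def by (simp add: measurable_lborel1)

lemma L2_prod_integrable:
  assumes "L2 T f" "L2 T g"
  shows "integrable lborel (\<lambda>s. ind T f s * ind T g s)"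
proof (rule Bochner_Integration.integrable_bound[where f="\<lambda>s. (ind T f s)\<^sup>2 + (ind T g s)\<^sup>2"])
  show "integrable lborel (\<lambda>s. (ind T f s)\<^sup>2 + (ind T g s)\<^sup>2)" using assms unfolding L2_def by auto
  show "(\<lambda>s. ind T f s * ind T g s) \<in> borel_measurable lborel" using L2_meas[OF assms(1)] L2_meas[OF assms(2)] by measurable
  show "AE x in lborel. norm (ind T f x * ind T g x) \<le> norm ((ind T f x)\<^sup>2 + (ind T g x)\<^sup>2)"
  proof (intro AE_I2)
    fix x
    have "\<bar>ind T f x * ind T g x\<bar> \<le> (ind T f x)\<^sup>2 + (ind T g x)\<^sup>2"
      using abs_prod_amgm[of 1 "ind T f x" "ind T g x"] by simp
    thus "norm (ind T f x * ind T g x) \<le> norm ((ind T f x)\<^sup>2 + (ind T g x)\<^sup>2)" by simp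
  qed
qed


lemma sq_lin_bound: "((a::real) * x + b * y)\<^sup>2 \<le> 2 * a\<^sup>2 * x\<^sup>2 + 2 * b\<^sup>2 * y\<^sup>2"
proof -
  have "0 \<le> (a * x - b * y)\<^sup>2" by simp
  thus ?thesis by (simp add: power2_eq_square algebra_simps)
qed

lemma L2_lin:
  assumes "L2 T f" "L2 T g"
  shows "L2 T (\<lambda>s. a * f s + b * g s)"
  unfolding L2_def ind_lin
proof
  have [measurable]: "ind T f \<in> borel_measurable borel" "ind T g \<in> borel_measurable borel"
    using assms by (simp_all add: L2_def)
  show m: "(\<lambda>s. a * ind T f s + b * ind T g s) \<in> borel_measurable borel"
    by measurable
  show "integrable lborel (\<lambda>s. (a * ind T f s + b * ind T g s)\<^sup>2)"
  proof (rule Bochner_Integration.integrable_bound[where f="\<lambda>s. 2 * a\<^sup>2 * (ind T f s)\<^sup>2 + 2 * b\<^sup>2 * (ind T g s)\<^sup>2"])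
    show "integrable lborel (\<lambda>s. 2 * a\<^sup>2 * (ind T f s)\<^sup>2 + 2 * b\<^sup>2 * (ind T g s)\<^sup>2)"
      using assms unfolding L2_def by auto
    show "(\<lambda>s. (a * ind T f s + b * ind T g s)\<^sup>2) \<in> borel_measurable lborel"
      using m by (simp add: measurable_lborel1)
    show "AE x in lborel. norm ((a * ind T f x + b * ind T g x)\<^sup>2) \<le> norm (2 * a\<^sup>2 * (ind T f x)\<^sup>2 + 2 * b\<^sup>2 * (ind T g x)\<^sup>2)"
    proof (rule AE_I2)
      fix x show "norm ((a * ind T f x + b * ind T g x)\<^sup>2) \<le> norm (2 * a\<^sup>2 * (ind T f x)\<^sup>2 + 2 * b\<^sup>2 * (ind T g x)\<^sup>2)"
        using sq_lin_bound[of a "ind T f x" b "ind T g x"] by (simp del: power2_sum)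
    qed
  qed
qed

lemma l2inner_sym: "l2inner T f g = l2inner T g f"
  unfolding l2inner_def by (simp add: mult.commute)

lemma l2inner_lin1:
  assumes "L2 T f" "L2 T g" "L2 T h"
  shows "l2inner T (\<lambda>s. a * f s + b * g s) h = a * l2inner T f h + b * l2inner T g h"
proof -
  have i1: "integrable lborel (\<lambda>s. ind T f s * ind T h s)" and i2: "integrable lborel (\<lambda>s. ind T g s * ind T h s)"
    using L2_prod_integrable assms by auto
  have "l2inner T (\<lambda>s. a * f s + b * g s) h = (\<integral>s. a * (ind T f s * ind T h s) + b * (ind T g s * ind T h s) \<partial>lborel)"
    unfolding l2inner_eq ind_lin by (simp add: algebra_simps)
  also have "\<dots> = a * (\<integral>s. ind T f s * ind T h s \<partial>lborel) + b * (\<integral>s. ind T g s * ind T h s \<partial>lborel)"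
    using i1 i2 by simp
  finally show ?thesis unfolding l2inner_eq .
qed

lemma l2inner_lin2:
  assumes "L2 T f" "L2 T g" "L2 T h"
  shows "l2inner T h (\<lambda>s. a * f s + b * g s) = a * l2inner T h f + b * l2inner T h g"
  using l2inner_lin1[OF assms] by (simp add: l2inner_sym)

lemma l2inner_self: "l2inner T f f = (\<integral>s. (ind T f s)\<^sup>2 \<partial>lborel)"
  unfolding l2inner_eq by (simp add: power2_eq_square)

lemma l2inner_self_nonneg: "0 \<le> l2inner T f f"
  unfolding l2inner_self by simp

lemma l2inner_bound:
  assumes "L2 T f" "L2 T g" "c > 0"
  shows "\<bar>l2inner T f g\<bar> \<le> (c * l2inner T f f + l2inner T g g / c) / 2"
proof -
  have "\<bar>l2inner T f g\<bar> \<le> (\<integral>s. (c * (ind T f s)\<^sup>2 + (ind T g s)\<^sup>2 / c) / 2 \<partial>lborel)"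
    unfolding l2inner_eq
    apply (rule integral_abs_bound_integral)
    using L2_prod_integrable[OF assms(1,2)] apply simp
    using assms(1,2) apply (simp add: L2_def)
    using abs_prod_amgm[OF assms(3)] by simp
  also have "\<dots> = (c * l2inner T f f + l2inner T g g / c) / 2"
    unfolding l2inner_self using assms(1,2) by (simp add: L2_def)
  finally show ?thesis .
qed

definition KB :: "real \<Rightarrow> (real \<Rightarrow> real \<Rightarrow> real) \<Rightarrow> real \<Rightarrow> bool" where
  "KB T G K \<longleftrightarrow> K \<ge> 0 \<and> (\<lambda>(t,s). G t s) \<in> borel_measurable borel \<and>
     (\<forall>t\<in>{0..T}. (\<integral>\<^sup>+ s\<in>{0..T}. ennreal ((G t s)\<^sup>2) \<partial>lborel) \<le> ennreal K)"

lemma KB_meas2: "KB T G K \<Longrightarrow> (\<lambda>(t,s). G t s) \<in> borel_measurable (borel \<Otimes>\<^sub>M borel)"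
  unfolding KB_def by (simp add: borel_prod)

lemma KB_row:
  assumes "KB T G K" "t \<in> {0..T}"
  shows "L2 T (G t)" "l2inner T (G t) (G t) \<le> K"
proof -
  have m2: "(\<lambda>(t,s). G t s) \<in> borel_measurable (borel \<Otimes>\<^sub>M borel)" using KB_meas2[OF assms(1)] .
  have mG: "G t \<in> borel_measurable borel"
    using measurable_Pair2[OF m2, of t] by simp
  have mi: "ind T (G t) \<in> borel_measurable borel" unfolding ind_def using mG by measurable
  have eq: "(\<integral>\<^sup>+ s. ennreal ((ind T (G t) s)\<^sup>2) \<partial>lborel) = (\<integral>\<^sup>+ s\<in>{0..T}. ennreal ((G t s)\<^sup>2) \<partial>lborel)"
    by (rule nn_integral_cong) (auto simp: ind_def split: split_indicator)
  have le: "(\<integral>\<^sup>+ s. ennreal ((ind T (G t) s)\<^sup>2) \<partial>lborel) \<le> ennreal K"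
    using eq assms unfolding KB_def by simp
  have int: "integrable lborel (\<lambda>s. (ind T (G t) s)\<^sup>2)"
    apply (rule integrableI_nonneg)
    using mi apply (simp add: measurable_lborel1)
     apply simp
    using le by (simp add: order_le_less_trans)
  show "L2 T (G t)" unfolding L2_def using mi int by simp
  have "ennreal (l2inner T (G t) (G t)) = (\<integral>\<^sup>+ s. ennreal ((ind T (G t) s)\<^sup>2) \<partial>lborel)"
    unfolding l2inner_self by (rule nn_integral_eq_integral[symmetric]) (use int in auto)
  with le have "ennreal (l2inner T (G t) (G t)) \<le> ennreal K" by simp
  moreover have "0 \<le> l2inner T (G t) (G t)" by (rule l2inner_self_nonneg)
  moreover have "K \<ge> 0" using assms(1) unfolding KB_def by simp
  ultimately show "l2inner T (G t) (G t) \<le> K"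
    by (simp add: ennreal_le_iff)
qed

lemma kop_eq: "kop T G f t = l2inner T (G t) f"
  unfolding kop_def l2inner_def ..

lemma kop_lin:
  assumes "KB T G K" "L2 T f" "L2 T g" "t \<in> {0..T}"
  shows "kop T G (\<lambda>s. a * f s + b * g s) t = a * kop T G f t + b * kop T G g t"
  unfolding kop_eq using l2inner_lin2[OF assms(2,3) KB_row(1)[OF assms(1,4)]] .

lemma kop_bound:
  assumes "KB T G K" "L2 T f" "t \<in> {0..T}"
  shows "(kop T G f t)\<^sup>2 \<le> K * l2inner T f f"
proof -
  let ?P = "l2inner T (G t) (G t)" and ?F = "l2inner T f f"
  have "\<bar>kop T G f t\<bar> \<le> sqrt (?P * ?F)"
    unfolding kop_eq
    by (rule amgm_bound[OF l2inner_self_nonneg l2inner_self_nonneg])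
       (rule l2inner_bound[OF KB_row(1)[OF assms(1,3)] assms(2)])
  hence "(kop T G f t)\<^sup>2 \<le> ?P * ?F"
    by (metis abs_ge_zero l2inner_self_nonneg mult_nonneg_nonneg power2_abs power_mono real_sqrt_pow2)
  also have "\<dots> \<le> K * ?F"
    by (rule mult_right_mono[OF KB_row(2)[OF assms(1,3)] l2inner_self_nonneg])
  finally show ?thesis .
qed

lemma kop_meas:
  assumes "KB T G K" "L2 T f"
  shows "kop T G f \<in> borel_measurable borel"
proof -
  have [measurable]: "(\<lambda>(t,s). G t s) \<in> borel_measurable (borel \<Otimes>\<^sub>M borel)" using KB_meas2[OF assms(1)] .
  have [measurable]: "ind T f \<in> borel_measurable borel" using assms(2) by (simp add: L2_def)
  have eqG: "\<And>t s. ind T (G t) s = indicator {0..T} s * G t s" by (simp add: ind_def)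
  have "(\<lambda>(t,s). indicator {0..T} s * G t s * ind T f s) \<in> borel_measurable (borel \<Otimes>\<^sub>M borel)"
    by measurable
  hence "(\<lambda>(t,s). ind T (G t) s * ind T f s) \<in> borel_measurable (borel \<Otimes>\<^sub>M borel)"
    by (simp only: eqG)
  hence m: "(\<lambda>(t,s). ind T (G t) s * ind T f s) \<in> borel_measurable (borel \<Otimes>\<^sub>M lborel)"
    by (simp add: measurable_cong_sets[OF sets_pair_measure_cong[OF refl sets_lborel] refl])
  have "(\<lambda>t. \<integral>s. ind T (G t) s * ind T f s \<partial>lborel) \<in> borel_measurable borel"
    using lborel.borel_measurable_lebesgue_integral[OF m] by simp
  thus ?thesis unfolding kop_eq l2inner_eq[abs_def] by simp
qed


lemma ind_sq_le:
  assumes "KB T G K" "L2 T f"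
  shows "(ind T (kop T G f) s)\<^sup>2 \<le> indicator {0..T} s * (K * l2inner T f f)"
  using kop_bound[OF assms] by (auto simp: ind_def split: split_indicator)

lemma int_ind_const: assumes "(T::real) \<ge> 0" shows "integrable lborel (\<lambda>s. indicator {0..T} s * (c::real))"
proof -
  have "integrable lborel (\<lambda>x. indicator {0..T} x *\<^sub>R c)" by (rule integrable_indicator) (use assms in \<open>auto simp: emeasure_lborel_Icc\<close>)
  thus ?thesis by simp
qed

lemma L2_kop:
  assumes "KB T G K" "L2 T f" "T \<ge> 0"
  shows "L2 T (kop T G f)" "l2inner T (kop T G f) (kop T G f) \<le> T * K * l2inner T f f"
proof -
  have mk[measurable]: "kop T G f \<in> borel_measurable borel" by (rule kop_meas[OF assms(1,2)])
  have mi: "ind T (kop T G f) \<in> borel_measurable borel" unfolding ind_def by measurable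
  have ic: "integrable lborel (\<lambda>s. indicator {0..T} s * (K * l2inner T f f))"
    by (rule int_ind_const[OF assms(3)])
  have int: "integrable lborel (\<lambda>s. (ind T (kop T G f) s)\<^sup>2)"
  proof (rule Bochner_Integration.integrable_bound[OF ic])
    show "(\<lambda>s. (ind T (kop T G f) s)\<^sup>2) \<in> borel_measurable lborel" using mi by (simp add: measurable_lborel1)
    have "0 \<le> K" using assms(1) by (simp add: KB_def)
    hence "\<And>s. 0 \<le> indicator {0..T} s * (K * l2inner T f f)"
      by (simp add: l2inner_self_nonneg)
    thus "AE x in lborel. norm ((ind T (kop T G f) x)\<^sup>2) \<le> norm (indicator {0..T} x * (K * l2inner T f f))"
      using ind_sq_le[OF assms(1,2)] by (intro AE_I2) simp
  qed
  show "L2 T (kop T G f)" unfolding L2_def using mi int by simp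
  have "l2inner T (kop T G f) (kop T G f) \<le> (\<integral>s. indicator {0..T} s * (K * l2inner T f f) \<partial>lborel)"
    unfolding l2inner_self[of T "kop T G f"] by (rule integral_mono[OF int ic ind_sq_le[OF assms(1,2)]])
  also have "\<dots> = T * K * l2inner T f f"
    using assms(3) by (simp add: mult.commute[of "indicator _ _"])
  finally show "l2inner T (kop T G f) (kop T G f) \<le> T * K * l2inner T f f" .
qed

lemma psi_path_bound:
  assumes "KB T G K" "L2 T f" "L2 T g" "T \<ge> 0" "c > 0"
  shows "\<bar>l2inner T f (kop T G g)\<bar> \<le> (c * l2inner T f f + T * K * l2inner T g g / c) / 2"
proof -
  have "\<bar>l2inner T f (kop T G g)\<bar> \<le> (c * l2inner T f f + l2inner T (kop T G g) (kop T G g) / c) / 2"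
    by (rule l2inner_bound[OF assms(2) L2_kop(1)[OF assms(1,3,4)] assms(5)])
  also have "\<dots> \<le> (c * l2inner T f f + T * K * l2inner T g g / c) / 2"
    using L2_kop(2)[OF assms(1,3,4)] assms(5) by (simp add: divide_right_mono)
  finally show ?thesis .
qed

lemma psi_path_lin2:
  assumes "KB T G K" "L2 T f" "L2 T g" "L2 T h" "T \<ge> 0"
  shows "l2inner T h (kop T G (\<lambda>s. a * f s + b * g s)) = a * l2inner T h (kop T G f) + b * l2inner T h (kop T G g)"
proof -
  have "l2inner T h (kop T G (\<lambda>s. a * f s + b * g s)) = l2inner T h (\<lambda>s. a * kop T G f s + b * kop T G g s)"
    by (rule l2inner_cong) (auto intro: kop_lin[OF assms(1-3)])
  also have "\<dots> = a * l2inner T h (kop T G f) + b * l2inner T h (kop T G g)"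
    by (rule l2inner_lin2[OF L2_kop(1)[OF assms(1,2,5)] L2_kop(1)[OF assms(1,3,5)] assms(4)])
  finally show ?thesis .
qed

lemma adm_KB:
  assumes "admissible_kernel T G"
  shows "\<exists>K. KB T G K" "\<exists>K. KB T (adj_kernel G) K"
proof -
  from assms obtain K1 K2 where
    m: "(\<lambda>(t,s). G t s) \<in> borel_measurable borel" and
    r: "\<forall>t\<in>{0..T}. (\<integral>\<^sup>+ s\<in>{0..T}. ennreal ((G t s)\<^sup>2) \<partial>lborel) \<le> ennreal K1" and
    c: "\<forall>s\<in>{0..T}. (\<integral>\<^sup>+ t\<in>{0..T}. ennreal ((G t s)\<^sup>2) \<partial>lborel) \<le> ennreal K2"
    unfolding admissible_kernel_def by blast
  have r': "\<forall>t\<in>{0..T}. (\<integral>\<^sup>+ s\<in>{0..T}. ennreal ((G t s)\<^sup>2) \<partial>lborel) \<le> ennreal (max K1 0)"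
    using r by (meson ennreal_leI max.cobounded1 order.trans)
  have c': "\<forall>s\<in>{0..T}. (\<integral>\<^sup>+ t\<in>{0..T}. ennreal ((G t s)\<^sup>2) \<partial>lborel) \<le> ennreal (max K2 0)"
    using c by (meson ennreal_leI max.cobounded1 order.trans)
  show "\<exists>K. KB T G K" using m r' unfolding KB_def by (intro exI[of _ "max K1 0"]) simp
  have m2: "(\<lambda>(t,s). G t s) \<in> borel_measurable (borel \<Otimes>\<^sub>M borel)" using m by (simp add: borel_prod)
  have "(\<lambda>(t,s). G s t) \<in> borel_measurable (borel \<Otimes>\<^sub>M borel)"
    using measurable_pair_swap[OF m2] by (simp add: case_prod_beta)
  hence "(\<lambda>(t,s). adj_kernel G t s) \<in> borel_measurable borel" by (simp add: borel_prod adj_kernel_def)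
  thus "\<exists>K. KB T (adj_kernel G) K" using c' unfolding KB_def adj_kernel_def
    by (intro exI[of _ "max K2 0"]) simp
qed


lemma l2inner_eq': "l2inner T f g = (\<integral>s. ind T f s * g s \<partial>lborel)"
  unfolding l2inner_eq ind_def by (rule Bochner_Integration.integral_cong) (auto split: split_indicator)

lemma kop_eq_int: "kop T G f t = (\<integral>s. G t s * ind T f s \<partial>lborel)"
  unfolding kop_def set_lebesgue_integral_def ind_def
  by (rule Bochner_Integration.integral_cong) (auto split: split_indicator)

lemma nonneg_psi:
  assumes adm: "admissible_kernel T G" and f: "L2 T f" and T: "T \<ge> 0"
  shows "0 \<le> l2inner T f (kop T G f)"
proof -
  obtain K1 where K1: "KB T G K1" using adm_KB[OF adm] by blast
  obtain K2 where K2: "KB T (adj_kernel G) K2" using adm_KB[OF adm] by blast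
  define fi where "fi = ind T f"
  have fim[measurable]: "fi \<in> borel_measurable borel" using f by (simp add: L2_def fi_def)
  have fi2: "integrable lborel (\<lambda>s. (fi s)\<^sup>2)" using f by (simp add: L2_def fi_def)
  have fiS: "\<And>s. s \<in> {0..T} \<Longrightarrow> fi s = f s" by (simp add: fi_def ind_def)
  have L2f: "L2_fun T fi" unfolding L2_fun_def set_integrable_def
  proof
    show "fi \<in> borel_measurable lborel" by (simp add: measurable_lborel1)
    have "(\<lambda>x. indicator {0..T} x *\<^sub>R (fi x)\<^sup>2) = (\<lambda>s. (fi s)\<^sup>2)"
      by (auto simp: fi_def ind_def split: split_indicator)
    thus "integrable lborel (\<lambda>x. indicator {0..T} x *\<^sub>R (fi x)\<^sup>2)" using fi2 by simp
  qed
  have ND: "0 \<le> (LINT t:{0..T}|lborel. (LINT s:{0..T}|lborel. (G t s + G s t) * fi s * fi t))"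
    using adm L2f unfolding admissible_kernel_def nonneg_definite_def by blast
  have inner: "(LINT s:{0..T}|lborel. (G t s + G s t) * fi s * fi t) = f t * (kop T G f t + kop T (adj_kernel G) f t)"
    if t: "t \<in> {0..T}" for t
  proof -
    have LG: "L2 T (G t)" using KB_row(1)[OF K1 t] .
    have LA: "L2 T (adj_kernel G t)" using KB_row(1)[OF K2 t] .
    have Lc: "L2 T (\<lambda>s. f t * f s + 0 * f s)" using L2_lin[OF f f] .
    have "(LINT s:{0..T}|lborel. (G t s + G s t) * fi s * fi t) =
          l2inner T (\<lambda>s. 1 * G t s + 1 * adj_kernel G t s) (\<lambda>s. f t * f s + 0 * f s)"
      unfolding l2inner_def by (rule set_lebesgue_integral_cong) (auto simp: fiS fiS[OF t] adj_kernel_def)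
    also have "\<dots> = l2inner T (G t) (\<lambda>s. f t * f s + 0 * f s) + l2inner T (adj_kernel G t) (\<lambda>s. f t * f s + 0 * f s)"
      using l2inner_lin1[OF LG LA Lc, of 1 1] by simp
    also have "\<dots> = f t * l2inner T (G t) f + f t * l2inner T (adj_kernel G t) f"
      using l2inner_lin2[OF f f LG, of "f t" 0] l2inner_lin2[OF f f LA, of "f t" 0] by simp
    finally show ?thesis unfolding kop_eq by (simp add: algebra_simps)
  qed
  have LkG: "L2 T (kop T G f)" using L2_kop(1)[OF K1 f T] .
  have LkA: "L2 T (kop T (adj_kernel G) f)" using L2_kop(1)[OF K2 f T] .
  have outer: "(LINT t:{0..T}|lborel. (LINT s:{0..T}|lborel. (G t s + G s t) * fi s * fi t)) =
      l2inner T f (kop T G f) + l2inner T f (kop T (adj_kernel G) f)"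
  proof -
    have "(LINT t:{0..T}|lborel. (LINT s:{0..T}|lborel. (G t s + G s t) * fi s * fi t)) =
          l2inner T f (\<lambda>t. 1 * kop T G f t + 1 * kop T (adj_kernel G) f t)"
      unfolding l2inner_def by (rule set_lebesgue_integral_cong) (simp, intro allI impI, simp only: inner mult_1)
    also have "\<dots> = l2inner T f (kop T G f) + l2inner T f (kop T (adj_kernel G) f)"
      using l2inner_lin2[OF LkG LkA f, of 1 1] by simp
    finally show ?thesis .
  qed
  have Gm: "(\<lambda>(s,t). G s t) \<in> borel_measurable (borel \<Otimes>\<^sub>M borel)" using KB_meas2[OF K1] .
  define H where "H = (\<lambda>s t. fi s * G s t * fi t)"
  have Hm: "case_prod H \<in> borel_measurable (lborel \<Otimes>\<^sub>M lborel)"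
  proof -
    have "(\<lambda>(s,t). fi s * G s t * fi t) \<in> borel_measurable (borel \<Otimes>\<^sub>M borel)"
      using Gm by measurable
    thus ?thesis unfolding H_def
      by (simp add: measurable_cong_sets[OF sets_pair_measure_cong[OF sets_lborel sets_lborel] refl])
  qed
  have D: "(\<integral>\<^sup>+ p\<in>{0..T}\<times>{0..T}. ennreal ((G (fst p) (snd p))\<^sup>2) \<partial>lborel) < \<infinity>"
    using adm unfolding admissible_kernel_def by blast
  have B1: "integrable (lborel \<Otimes>\<^sub>M lborel) (\<lambda>(s,t). indicator {0..T} s * indicator {0..T} t * (G s t)\<^sup>2)"
  proof (rule integrableI_nonneg)
    have "(\<lambda>(s,t). indicator {0..T} s * indicator {0..T} t * (G s t)\<^sup>2) \<in> borel_measurable (borel \<Otimes>\<^sub>M borel)"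
      using Gm by measurable
    thus "(\<lambda>(s,t). indicator {0..T} s * indicator {0..T} t * (G s t)\<^sup>2) \<in> borel_measurable (lborel \<Otimes>\<^sub>M lborel)"
      by (simp add: measurable_cong_sets[OF sets_pair_measure_cong[OF sets_lborel sets_lborel] refl])
    show "AE x in lborel \<Otimes>\<^sub>M lborel. 0 \<le> (case x of (s, t) \<Rightarrow> indicator {0..T} s * indicator {0..T} t * (G s t)\<^sup>2)"
      by (auto intro!: AE_I2)
    have "(\<integral>\<^sup>+ x. ennreal (case x of (s, t) \<Rightarrow> indicator {0..T} s * indicator {0..T} t * (G s t)\<^sup>2) \<partial>(lborel \<Otimes>\<^sub>M lborel))
        = (\<integral>\<^sup>+ p\<in>{0..T}\<times>{0..T}. ennreal ((G (fst p) (snd p))\<^sup>2) \<partial>lborel)"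
      unfolding lborel_prod by (rule nn_integral_cong) (auto simp: indicator_def)
    thus "(\<integral>\<^sup>+ x. ennreal (case x of (s, t) \<Rightarrow> indicator {0..T} s * indicator {0..T} t * (G s t)\<^sup>2) \<partial>(lborel \<Otimes>\<^sub>M lborel)) < \<infinity>"
      using D by simp
  qed
  have B2: "integrable (lborel \<Otimes>\<^sub>M lborel) (\<lambda>(s,t). (fi s)\<^sup>2 * (fi t)\<^sup>2)"
  proof (rule lborel_pair.Fubini_integrable)
    have "(\<lambda>(s,t). (fi s)\<^sup>2 * (fi t)\<^sup>2) \<in> borel_measurable (borel \<Otimes>\<^sub>M borel)" by measurable
    thus "(\<lambda>(s,t). (fi s)\<^sup>2 * (fi t)\<^sup>2) \<in> borel_measurable (lborel \<Otimes>\<^sub>M lborel)"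
      by (simp add: measurable_cong_sets[OF sets_pair_measure_cong[OF sets_lborel sets_lborel] refl])
    have "integrable lborel (\<lambda>x. (fi x)\<^sup>2 * (\<integral>y. (fi y)\<^sup>2 \<partial>lborel))" using fi2 by simp
    moreover have "\<And>x. (\<integral>y. norm (case (x, y) of (s, t) \<Rightarrow> (fi s)\<^sup>2 * (fi t)\<^sup>2) \<partial>lborel) = (fi x)\<^sup>2 * (\<integral>y. (fi y)\<^sup>2 \<partial>lborel)"
      by simp
    ultimately show "integrable lborel (\<lambda>x. \<integral>y. norm (case (x, y) of (s, t) \<Rightarrow> (fi s)\<^sup>2 * (fi t)\<^sup>2) \<partial>lborel)"
      by simp
    show "AE x in lborel. integrable lborel (\<lambda>y. case (x, y) of (s, t) \<Rightarrow> (fi s)\<^sup>2 * (fi t)\<^sup>2)"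
      using fi2 by (intro AE_I2) simp
  qed
  have Hint: "integrable (lborel \<Otimes>\<^sub>M lborel) (case_prod H)"
  proof (rule Bochner_Integration.integrable_bound[where f="\<lambda>x. ((\<lambda>(s,t). indicator {0..T} s * indicator {0..T} t * (G s t)\<^sup>2) x + (\<lambda>(s,t). (fi s)\<^sup>2 * (fi t)\<^sup>2) x) / 2"])
    show "integrable (lborel \<Otimes>\<^sub>M lborel) (\<lambda>x. ((\<lambda>(s,t). indicator {0..T} s * indicator {0..T} t * (G s t)\<^sup>2) x + (\<lambda>(s,t). (fi s)\<^sup>2 * (fi t)\<^sup>2) x) / 2)"
      by (rule integrable_divide[OF Bochner_Integration.integrable_add[OF B1 B2]])
    show "case_prod H \<in> borel_measurable (lborel \<Otimes>\<^sub>M lborel)" by (rule Hm)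
    show "AE x in lborel \<Otimes>\<^sub>M lborel. norm (case_prod H x) \<le> norm (((\<lambda>(s,t). indicator {0..T} s * indicator {0..T} t * (G s t)\<^sup>2) x + (\<lambda>(s,t). (fi s)\<^sup>2 * (fi t)\<^sup>2) x) / 2)"
    proof (rule AE_I2)
      fix x :: "real \<times> real"
      obtain s t where x: "x = (s, t)" by (cases x)
      have "H s t = (indicator {0..T} s * indicator {0..T} t * G s t) * (fi s * fi t)"
        by (auto simp: H_def fi_def ind_def split: split_indicator)
      hence "\<bar>H s t\<bar> \<le> (1 * (indicator {0..T} s * indicator {0..T} t * G s t)\<^sup>2 + (fi s * fi t)\<^sup>2 / 1) / 2"
        using abs_prod_amgm[of 1] by simp
      also have "\<dots> = (indicator {0..T} s * indicator {0..T} t * (G s t)\<^sup>2 + (fi s)\<^sup>2 * (fi t)\<^sup>2) / 2"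
        by (auto simp: power_mult_distrib split: split_indicator)
      finally show "norm (case_prod H x) \<le> norm (((\<lambda>(s,t). indicator {0..T} s * indicator {0..T} t * (G s t)\<^sup>2) x + (\<lambda>(s,t). (fi s)\<^sup>2 * (fi t)\<^sup>2) x) / 2)"
        using x by simp
    qed
  qed
  have F: "(\<integral>t. (\<integral>s. H s t \<partial>lborel) \<partial>lborel) = (\<integral>s. (\<integral>t. H s t \<partial>lborel) \<partial>lborel)"
    using lborel_pair.Fubini_integral[OF Hint] .
  have e1: "l2inner T f (kop T (adj_kernel G) f) = (\<integral>t. (\<integral>s. H s t \<partial>lborel) \<partial>lborel)"
    unfolding l2inner_eq' kop_eq_int fi_def[symmetric] H_def adj_kernel_def
    by (simp add: mult.commute mult.left_commute)
  have e2: "l2inner T f (kop T G f) = (\<integral>s. (\<integral>t. H s t \<partial>lborel) \<partial>lborel)"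
    unfolding l2inner_eq' kop_eq_int fi_def[symmetric] H_def
    by (simp add: mult.commute mult.left_commute)
  have "l2inner T f (kop T (adj_kernel G) f) = l2inner T f (kop T G f)" using e1 e2 F by simp
  with ND outer show ?thesis by simp
qed

definition ui :: "real \<Rightarrow> (real \<Rightarrow> 'a \<Rightarrow> real) \<Rightarrow> real \<Rightarrow> 'a \<Rightarrow> real" where
  "ui T u = (\<lambda>s \<omega>. indicator {0..T} s * u s \<omega>)"

lemma ind_ui: "ind T (\<lambda>t. u t \<omega>) = (\<lambda>s. ui T u s \<omega>)"
  by (simp add: ind_def ui_def)

definition good :: "'a measure \<Rightarrow> real \<Rightarrow> (real \<Rightarrow> 'a \<Rightarrow> real) \<Rightarrow> bool" where
  "good M T u \<longleftrightarrow> (\<lambda>(s,\<omega>). ui T u s \<omega>) \<in> borel_measurable (lborel \<Otimes>\<^sub>M M) \<and>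
      integrable (lborel \<Otimes>\<^sub>M M) (\<lambda>(s,\<omega>). (ui T u s \<omega>)\<^sup>2)"

definition Phi :: "'a measure \<Rightarrow> real \<Rightarrow> (real \<Rightarrow> 'a \<Rightarrow> real) \<Rightarrow> (real \<Rightarrow> 'a \<Rightarrow> real) \<Rightarrow> real" where
  "Phi M T x y = (\<integral>\<omega>. l2inner T (\<lambda>t. x t \<omega>) (\<lambda>t. y t \<omega>) \<partial>M)"

definition Psi :: "'a measure \<Rightarrow> real \<Rightarrow> (real \<Rightarrow> real \<Rightarrow> real) \<Rightarrow> (real \<Rightarrow> 'a \<Rightarrow> real) \<Rightarrow> (real \<Rightarrow> 'a \<Rightarrow> real) \<Rightarrow> real" where
  "Psi M T G x y = (\<integral>\<omega>. l2inner T (\<lambda>t. x t \<omega>) (kop T G (\<lambda>t. y t \<omega>)) \<partial>M)"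

locale ctx = prob_space M for M :: "'a measure" +
  fixes T :: real
  assumes Tpos: "T > 0"
begin

lemma T0: "T \<ge> 0" using Tpos by simp

sublocale P: pair_sigma_finite lborel M
  unfolding pair_sigma_finite_def
  using lborel.sigma_finite_measure_axioms sigma_finite_measure_axioms by simp

lemma adm_meas:
  assumes "u \<in> admissible_controls M T F" "space (F T) = space M" "sets (F T) \<subseteq> sets M"
  shows "(\<lambda>(s,\<omega>). ui T u s \<omega>) \<in> borel_measurable (lborel \<Otimes>\<^sub>M M)"
proof -
  have m1: "(\<lambda>(s,\<omega>). u s \<omega>) \<in> borel_measurable (restrict_space borel {0..T} \<Otimes>\<^sub>M F T)"
    using assms(1) T0 unfolding admissible_controls_def prog_meas_def by auto
  have idMF: "(\<lambda>x. x) \<in> measurable M (F T)"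
    using assms(2,3) by (auto intro!: measurableI)
  have idp: "(\<lambda>x. x) \<in> measurable (restrict_space borel {0..T} \<Otimes>\<^sub>M M) (restrict_space borel {0..T} \<Otimes>\<^sub>M F T)"
    unfolding measurable_pair_iff using measurable_compose[OF measurable_snd idMF] by (simp add: comp_def)
  have m2: "(\<lambda>(s,\<omega>). u s \<omega>) \<in> borel_measurable (restrict_space borel {0..T} \<Otimes>\<^sub>M M)"
    using measurable_compose[OF idp m1] by simp
  define c where "c = (\<lambda>s::real. max 0 (min T s))"
  have cm: "c \<in> measurable borel (restrict_space borel {0..T})"
    unfolding measurable_restrict_space2_iff c_def using T0 by auto
  have cp: "(\<lambda>(s,\<omega>). (c s, \<omega>)) \<in> measurable (borel \<Otimes>\<^sub>M M) (restrict_space borel {0..T} \<Otimes>\<^sub>M M)"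
    using cm by measurable
  have m3: "(\<lambda>(s,\<omega>). u (c s) \<omega>) \<in> borel_measurable (borel \<Otimes>\<^sub>M M)"
    using measurable_compose[OF cp m2] by (simp add: case_prod_beta)
  have m4: "(\<lambda>(s,\<omega>). indicator {0..T} s * u (c s) \<omega>) \<in> borel_measurable (borel \<Otimes>\<^sub>M M)"
    using m3 by measurable
  have eq: "(\<lambda>(s,\<omega>). indicator {0..T} s * u (c s) \<omega>) = (\<lambda>(s,\<omega>). ui T u s \<omega>)"
    by (auto simp: ui_def c_def fun_eq_iff split: split_indicator)
  show ?thesis using m4 unfolding eq
    by (simp add: measurable_cong_sets[OF sets_pair_measure_cong[OF sets_lborel refl] refl])
qed

lemma sqnorm_eq:
  assumes m: "(\<lambda>(s,\<omega>). ui T u s \<omega>) \<in> borel_measurable (lborel \<Otimes>\<^sub>M M)"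
  shows "sqnorm2T M T u = (\<integral>\<^sup>+ (s,\<omega>). ennreal ((ui T u s \<omega>)\<^sup>2) \<partial>(lborel \<Otimes>\<^sub>M M))"
proof -
  have m2[measurable]: "(\<lambda>(s,\<omega>). ennreal ((ui T u s \<omega>)\<^sup>2)) \<in> borel_measurable (lborel \<Otimes>\<^sub>M M)"
    using m by measurable
  have "sqnorm2T M T u = (\<integral>\<^sup>+ t. (\<integral>\<^sup>+ \<omega>. ennreal ((ui T u t \<omega>)\<^sup>2) \<partial>M) \<partial>lborel)"
    unfolding sqnorm2T_def
  proof (rule nn_integral_cong)
    fix t
    show "(\<integral>\<^sup>+ \<omega>. ennreal ((u t \<omega>)\<^sup>2) \<partial>M) * indicator {0..T} t = (\<integral>\<^sup>+ \<omega>. ennreal ((ui T u t \<omega>)\<^sup>2) \<partial>M)"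
      by (cases "t \<in> {0..T}") (simp_all add: ui_def)
  qed
  also have "\<dots> = (\<integral>\<^sup>+ (s,\<omega>). ennreal ((ui T u s \<omega>)\<^sup>2) \<partial>(lborel \<Otimes>\<^sub>M M))"
    using nn_integral_fst[OF m2] by simp
  finally show ?thesis .
qed

lemma adm_good:
  assumes "u \<in> admissible_controls M T F" "space (F T) = space M" "sets (F T) \<subseteq> sets M"
  shows "good M T u"
proof -
  have m: "(\<lambda>(s,\<omega>). ui T u s \<omega>) \<in> borel_measurable (lborel \<Otimes>\<^sub>M M)" by (rule adm_meas[OF assms])
  have fin: "sqnorm2T M T u < \<infinity>" using assms(1) unfolding admissible_controls_def by simp
  have "integrable (lborel \<Otimes>\<^sub>M M) (\<lambda>(s,\<omega>). (ui T u s \<omega>)\<^sup>2)"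
  proof (rule integrableI_nonneg)
    show "(\<lambda>(s,\<omega>). (ui T u s \<omega>)\<^sup>2) \<in> borel_measurable (lborel \<Otimes>\<^sub>M M)" using m by measurable
    show "AE x in lborel \<Otimes>\<^sub>M M. 0 \<le> (case x of (s, \<omega>) \<Rightarrow> (ui T u s \<omega>)\<^sup>2)" by (auto intro!: AE_I2)
    show "(\<integral>\<^sup>+ x. ennreal (case x of (s, \<omega>) \<Rightarrow> (ui T u s \<omega>)\<^sup>2) \<partial>(lborel \<Otimes>\<^sub>M M)) < \<infinity>"
    proof -
      have "(\<integral>\<^sup>+ x. ennreal (case x of (s, \<omega>) \<Rightarrow> (ui T u s \<omega>)\<^sup>2) \<partial>(lborel \<Otimes>\<^sub>M M)) = sqnorm2T M T u"
        unfolding sqnorm_eq[OF m] by (rule nn_integral_cong) (auto split: prod.splits)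
      thus ?thesis using fin by simp
    qed
  qed
  thus ?thesis using m unfolding good_def by simp
qed


lemma good_meas: "good M T u \<Longrightarrow> (\<lambda>(s,\<omega>). ui T u s \<omega>) \<in> borel_measurable (lborel \<Otimes>\<^sub>M M)"
  by (simp add: good_def)

lemma good_int: "good M T u \<Longrightarrow> integrable (lborel \<Otimes>\<^sub>M M) (\<lambda>(s,\<omega>). (ui T u s \<omega>)\<^sup>2)"
  by (simp add: good_def)

lemma good_sec_meas:
  assumes "good M T u" "\<omega> \<in> space M"
  shows "(\<lambda>s. ui T u s \<omega>) \<in> borel_measurable borel"
  using measurable_Pair1[OF good_meas[OF assms(1)] assms(2)] by simp

lemma good_AE_L2:
  assumes "good M T u"
  shows "AE \<omega> in M. L2 T (\<lambda>t. u t \<omega>)"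
proof -
  have "AE \<omega> in M. integrable lborel (\<lambda>s. (ui T u s \<omega>)\<^sup>2)"
    using P.AE_integrable_snd[of "\<lambda>s \<omega>. (ui T u s \<omega>)\<^sup>2"] good_int[OF assms] by simp
  thus ?thesis using AE_space
    by eventually_elim (simp add: L2_def ind_ui good_sec_meas[OF assms])
qed

lemma nsq_eq: "l2inner T (\<lambda>t. u t \<omega>) (\<lambda>t. u t \<omega>) = (\<integral>s. (ui T u s \<omega>)\<^sup>2 \<partial>lborel)"
  by (simp add: l2inner_self ind_ui)

lemma good_nsq_int:
  assumes "good M T u"
  shows "integrable M (\<lambda>\<omega>. l2inner T (\<lambda>t. u t \<omega>) (\<lambda>t. u t \<omega>))"
  unfolding nsq_eq using P.integrable_snd[of "\<lambda>s \<omega>. (ui T u s \<omega>)\<^sup>2"] good_int[OF assms] by simp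

lemma good_Phi_self:
  assumes "good M T u"
  shows "Phi M T u u = (\<integral>p. (case p of (s,\<omega>) \<Rightarrow> (ui T u s \<omega>)\<^sup>2) \<partial>(lborel \<Otimes>\<^sub>M M))"
  unfolding Phi_def nsq_eq using P.integral_snd[of "\<lambda>s \<omega>. (ui T u s \<omega>)\<^sup>2"] good_int[OF assms] by simp

lemma Phi_self_nonneg: "0 \<le> Phi M T u u"
  unfolding Phi_def by (rule integral_nonneg_AE) (simp add: l2inner_self_nonneg)

lemma good_sqnorm:
  assumes "good M T u"
  shows "sqnorm2T M T u = ennreal (Phi M T u u)"
proof -
  have "sqnorm2T M T u = (\<integral>\<^sup>+ p. ennreal (case p of (s,\<omega>) \<Rightarrow> (ui T u s \<omega>)\<^sup>2) \<partial>(lborel \<Otimes>\<^sub>M M))"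
    unfolding sqnorm_eq[OF good_meas[OF assms]] by (rule nn_integral_cong) (auto split: prod.splits)
  also have "\<dots> = ennreal (Phi M T u u)"
    unfolding good_Phi_self[OF assms] by (rule nn_integral_eq_integral[OF good_int[OF assms]]) (auto intro!: AE_I2)
  finally show ?thesis .
qed

lemma l2_meas:
  assumes "good M T u" "good M T w"
  shows "(\<lambda>\<omega>. l2inner T (\<lambda>t. u t \<omega>) (\<lambda>t. w t \<omega>)) \<in> borel_measurable M"
proof -
  have [measurable]: "(\<lambda>(s,\<omega>). ui T u s \<omega>) \<in> borel_measurable (lborel \<Otimes>\<^sub>M M)"
    "(\<lambda>(s,\<omega>). ui T w s \<omega>) \<in> borel_measurable (lborel \<Otimes>\<^sub>M M)"
    using good_meas assms by auto
  have "(\<lambda>\<omega>. \<integral>s. ui T u s \<omega> * ui T w s \<omega> \<partial>lborel) \<in> borel_measurable M" by measurable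
  thus ?thesis by (simp add: l2inner_eq ind_ui)
qed

lemma psi_meas:
  assumes "good M T u" "good M T w" "KB T G K"
  shows "(\<lambda>\<omega>. l2inner T (\<lambda>t. u t \<omega>) (kop T G (\<lambda>t. w t \<omega>))) \<in> borel_measurable M"
proof -
  have [measurable]: "(\<lambda>(s,\<omega>). ui T u s \<omega>) \<in> borel_measurable (lborel \<Otimes>\<^sub>M M)"
    "(\<lambda>(s,\<omega>). ui T w s \<omega>) \<in> borel_measurable (lborel \<Otimes>\<^sub>M M)"
    using good_meas assms by auto
  have [measurable]: "(\<lambda>(t,s). G t s) \<in> borel_measurable (lborel \<Otimes>\<^sub>M lborel)"
    using KB_meas2[OF assms(3)]
    by (simp add: measurable_cong_sets[OF sets_pair_measure_cong[OF sets_lborel sets_lborel] refl])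
  have "(\<lambda>\<omega>. \<integral>s. ui T u s \<omega> * (indicator {0..T} s * (\<integral>r. G s r * ui T w r \<omega> \<partial>lborel)) \<partial>lborel) \<in> borel_measurable M"
    by measurable
  moreover have "\<And>\<omega>. l2inner T (\<lambda>t. u t \<omega>) (kop T G (\<lambda>t. w t \<omega>)) =
      (\<integral>s. ui T u s \<omega> * (indicator {0..T} s * (\<integral>r. G s r * ui T w r \<omega> \<partial>lborel)) \<partial>lborel)"
    unfolding l2inner_eq kop_eq_int ind_ui by (simp add: ind_def)
  ultimately show ?thesis by simp
qed

end

context ctx begin

abbreviation nsq where "nsq u \<omega> \<equiv> l2inner T (\<lambda>t. u t \<omega>) (\<lambda>t. u t \<omega>)"

lemma good_lin:
  assumes "good M T u" "good M T w"
  shows "good M T (\<lambda>t \<omega>. a * u t \<omega> + b * w t \<omega>)"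
proof -
  have eq: "ui T (\<lambda>t \<omega>. a * u t \<omega> + b * w t \<omega>) = (\<lambda>s \<omega>. a * ui T u s \<omega> + b * ui T w s \<omega>)"
    by (auto simp: ui_def fun_eq_iff algebra_simps)
  have [measurable]: "(\<lambda>(s,\<omega>). ui T u s \<omega>) \<in> borel_measurable (lborel \<Otimes>\<^sub>M M)"
    "(\<lambda>(s,\<omega>). ui T w s \<omega>) \<in> borel_measurable (lborel \<Otimes>\<^sub>M M)"
    using good_meas assms by auto
  have m: "(\<lambda>(s,\<omega>). a * ui T u s \<omega> + b * ui T w s \<omega>) \<in> borel_measurable (lborel \<Otimes>\<^sub>M M)" by measurable
  have "integrable (lborel \<Otimes>\<^sub>M M) (\<lambda>(s,\<omega>). (a * ui T u s \<omega> + b * ui T w s \<omega>)\<^sup>2)"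
  proof (rule Bochner_Integration.integrable_bound[where f="\<lambda>p. 2 * a\<^sup>2 * (\<lambda>(s,\<omega>). (ui T u s \<omega>)\<^sup>2) p + 2 * b\<^sup>2 * (\<lambda>(s,\<omega>). (ui T w s \<omega>)\<^sup>2) p"])
    show "integrable (lborel \<Otimes>\<^sub>M M) (\<lambda>p. 2 * a\<^sup>2 * (\<lambda>(s,\<omega>). (ui T u s \<omega>)\<^sup>2) p + 2 * b\<^sup>2 * (\<lambda>(s,\<omega>). (ui T w s \<omega>)\<^sup>2) p)"
      using good_int[OF assms(1)] good_int[OF assms(2)] by auto
    show "(\<lambda>(s,\<omega>). (a * ui T u s \<omega> + b * ui T w s \<omega>)\<^sup>2) \<in> borel_measurable (lborel \<Otimes>\<^sub>M M)" by measurable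
    show "AE x in lborel \<Otimes>\<^sub>M M. norm (case x of (s,\<omega>) \<Rightarrow> (a * ui T u s \<omega> + b * ui T w s \<omega>)\<^sup>2)
       \<le> norm (2 * a\<^sup>2 * (\<lambda>(s,\<omega>). (ui T u s \<omega>)\<^sup>2) x + 2 * b\<^sup>2 * (\<lambda>(s,\<omega>). (ui T w s \<omega>)\<^sup>2) x)"
    proof (rule AE_I2)
      fix x :: "real \<times> 'a"
      obtain s \<omega> where x: "x = (s,\<omega>)" by (cases x)
      show "norm (case x of (s,\<omega>) \<Rightarrow> (a * ui T u s \<omega> + b * ui T w s \<omega>)\<^sup>2)
       \<le> norm (2 * a\<^sup>2 * (\<lambda>(s,\<omega>). (ui T u s \<omega>)\<^sup>2) x + 2 * b\<^sup>2 * (\<lambda>(s,\<omega>). (ui T w s \<omega>)\<^sup>2) x)"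
        using sq_lin_bound[of a "ui T u s \<omega>" b "ui T w s \<omega>"] x by (simp del: power2_sum)
    qed
  qed
  thus ?thesis using m unfolding good_def eq by simp
qed

lemma good_zero: "good M T (\<lambda>t \<omega>. 0)"
proof -
  have "(\<lambda>(s::real, \<omega>::'a). 0::real) = (\<lambda>_. 0)" by auto
  thus ?thesis unfolding good_def ui_def by simp
qed

lemma Phi_int:
  assumes "good M T u" "good M T w"
  shows "integrable M (\<lambda>\<omega>. l2inner T (\<lambda>t. u t \<omega>) (\<lambda>t. w t \<omega>))"
proof (rule Bochner_Integration.integrable_bound[where f="\<lambda>\<omega>. (nsq u \<omega> + nsq w \<omega>) / 2"])
  show "integrable M (\<lambda>\<omega>. (nsq u \<omega> + nsq w \<omega>) / 2)"
    using good_nsq_int[OF assms(1)] good_nsq_int[OF assms(2)] by auto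
  show "(\<lambda>\<omega>. l2inner T (\<lambda>t. u t \<omega>) (\<lambda>t. w t \<omega>)) \<in> borel_measurable M" by (rule l2_meas[OF assms])
  show "AE \<omega> in M. norm (l2inner T (\<lambda>t. u t \<omega>) (\<lambda>t. w t \<omega>)) \<le> norm ((nsq u \<omega> + nsq w \<omega>) / 2)"
    using good_AE_L2[OF assms(1)] good_AE_L2[OF assms(2)]
  proof eventually_elim
    case (elim \<omega>)
    thus ?case using l2inner_bound[OF elim, of 1] l2inner_self_nonneg[of T "\<lambda>t. u t \<omega>"]
        l2inner_self_nonneg[of T "\<lambda>t. w t \<omega>"] by simp
  qed
qed

lemma Psi_int:
  assumes "good M T u" "good M T w" "KB T G K"
  shows "integrable M (\<lambda>\<omega>. l2inner T (\<lambda>t. u t \<omega>) (kop T G (\<lambda>t. w t \<omega>)))"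
proof (rule Bochner_Integration.integrable_bound[where f="\<lambda>\<omega>. (nsq u \<omega> + T * K * nsq w \<omega>) / 2"])
  show "integrable M (\<lambda>\<omega>. (nsq u \<omega> + T * K * nsq w \<omega>) / 2)"
    using good_nsq_int[OF assms(1)] good_nsq_int[OF assms(2)] by auto
  show "(\<lambda>\<omega>. l2inner T (\<lambda>t. u t \<omega>) (kop T G (\<lambda>t. w t \<omega>))) \<in> borel_measurable M" by (rule psi_meas[OF assms])
  have K: "K \<ge> 0" using assms(3) by (simp add: KB_def)
  show "AE \<omega> in M. norm (l2inner T (\<lambda>t. u t \<omega>) (kop T G (\<lambda>t. w t \<omega>))) \<le> norm ((nsq u \<omega> + T * K * nsq w \<omega>) / 2)"
    using good_AE_L2[OF assms(1)] good_AE_L2[OF assms(2)]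
  proof eventually_elim
    case (elim \<omega>)
    thus ?case using psi_path_bound[OF assms(3) elim T0, of 1] l2inner_self_nonneg[of T "\<lambda>t. u t \<omega>"]
        l2inner_self_nonneg[of T "\<lambda>t. w t \<omega>"] K T0 by simp
  qed
qed

lemma Phi_sym: "Phi M T u w = Phi M T w u"
  unfolding Phi_def by (simp add: l2inner_sym)

lemma Phi_lin1:
  assumes "good M T u" "good M T u'" "good M T w"
  shows "Phi M T (\<lambda>t \<omega>. a * u t \<omega> + b * u' t \<omega>) w = a * Phi M T u w + b * Phi M T u' w"
proof -
  have "Phi M T (\<lambda>t \<omega>. a * u t \<omega> + b * u' t \<omega>) w =
     (\<integral>\<omega>. a * l2inner T (\<lambda>t. u t \<omega>) (\<lambda>t. w t \<omega>) + b * l2inner T (\<lambda>t. u' t \<omega>) (\<lambda>t. w t \<omega>) \<partial>M)"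
    unfolding Phi_def
  proof (rule integral_cong_AE)
    show "(\<lambda>\<omega>. l2inner T (\<lambda>t. a * u t \<omega> + b * u' t \<omega>) (\<lambda>t. w t \<omega>)) \<in> borel_measurable M"
      using l2_meas[OF good_lin[OF assms(1,2)] assms(3)] by simp
    show "(\<lambda>\<omega>. a * l2inner T (\<lambda>t. u t \<omega>) (\<lambda>t. w t \<omega>) + b * l2inner T (\<lambda>t. u' t \<omega>) (\<lambda>t. w t \<omega>)) \<in> borel_measurable M"
      using l2_meas[OF assms(1,3)] l2_meas[OF assms(2,3)] by measurable
    show "AE \<omega> in M. l2inner T (\<lambda>t. a * u t \<omega> + b * u' t \<omega>) (\<lambda>t. w t \<omega>) =
        a * l2inner T (\<lambda>t. u t \<omega>) (\<lambda>t. w t \<omega>) + b * l2inner T (\<lambda>t. u' t \<omega>) (\<lambda>t. w t \<omega>)"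
      using good_AE_L2[OF assms(1)] good_AE_L2[OF assms(2)] good_AE_L2[OF assms(3)]
      by eventually_elim (rule l2inner_lin1)
  qed
  also have "\<dots> = a * Phi M T u w + b * Phi M T u' w"
    unfolding Phi_def using Phi_int[OF assms(1,3)] Phi_int[OF assms(2,3)] by simp
  finally show ?thesis .
qed

lemma Phi_lin2:
  assumes "good M T u" "good M T u'" "good M T w"
  shows "Phi M T w (\<lambda>t \<omega>. a * u t \<omega> + b * u' t \<omega>) = a * Phi M T w u + b * Phi M T w u'"
  using Phi_lin1[OF assms] by (simp add: Phi_sym)

lemma Psi_lin1:
  assumes "good M T u" "good M T u'" "good M T w" "KB T G K"
  shows "Psi M T G (\<lambda>t \<omega>. a * u t \<omega> + b * u' t \<omega>) w = a * Psi M T G u w + b * Psi M T G u' w"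
proof -
  have "Psi M T G (\<lambda>t \<omega>. a * u t \<omega> + b * u' t \<omega>) w =
     (\<integral>\<omega>. a * l2inner T (\<lambda>t. u t \<omega>) (kop T G (\<lambda>t. w t \<omega>)) + b * l2inner T (\<lambda>t. u' t \<omega>) (kop T G (\<lambda>t. w t \<omega>)) \<partial>M)"
    unfolding Psi_def
  proof (rule integral_cong_AE)
    show "(\<lambda>\<omega>. l2inner T (\<lambda>t. a * u t \<omega> + b * u' t \<omega>) (kop T G (\<lambda>t. w t \<omega>))) \<in> borel_measurable M"
      using psi_meas[OF good_lin[OF assms(1,2)] assms(3,4)] by simp
    show "(\<lambda>\<omega>. a * l2inner T (\<lambda>t. u t \<omega>) (kop T G (\<lambda>t. w t \<omega>)) + b * l2inner T (\<lambda>t. u' t \<omega>) (kop T G (\<lambda>t. w t \<omega>))) \<in> borel_measurable M"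
      using psi_meas[OF assms(1,3,4)] psi_meas[OF assms(2,3,4)] by measurable
    show "AE \<omega> in M. l2inner T (\<lambda>t. a * u t \<omega> + b * u' t \<omega>) (kop T G (\<lambda>t. w t \<omega>)) =
        a * l2inner T (\<lambda>t. u t \<omega>) (kop T G (\<lambda>t. w t \<omega>)) + b * l2inner T (\<lambda>t. u' t \<omega>) (kop T G (\<lambda>t. w t \<omega>))"
      using good_AE_L2[OF assms(1)] good_AE_L2[OF assms(2)] good_AE_L2[OF assms(3)]
    proof eventually_elim
      case (elim \<omega>)
      show ?case by (rule l2inner_lin1[OF elim(1,2) L2_kop(1)[OF assms(4) elim(3) T0]])
    qed
  qed
  also have "\<dots> = a * Psi M T G u w + b * Psi M T G u' w"
    unfolding Psi_def using Psi_int[OF assms(1,3,4)] Psi_int[OF assms(2,3,4)] by simp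
  finally show ?thesis .
qed

lemma Psi_lin2:
  assumes "good M T u" "good M T u'" "good M T w" "KB T G K"
  shows "Psi M T G w (\<lambda>t \<omega>. a * u t \<omega> + b * u' t \<omega>) = a * Psi M T G w u + b * Psi M T G w u'"
proof -
  have "Psi M T G w (\<lambda>t \<omega>. a * u t \<omega> + b * u' t \<omega>) =
     (\<integral>\<omega>. a * l2inner T (\<lambda>t. w t \<omega>) (kop T G (\<lambda>t. u t \<omega>)) + b * l2inner T (\<lambda>t. w t \<omega>) (kop T G (\<lambda>t. u' t \<omega>)) \<partial>M)"
    unfolding Psi_def
  proof (rule integral_cong_AE)
    show "(\<lambda>\<omega>. l2inner T (\<lambda>t. w t \<omega>) (kop T G (\<lambda>t. a * u t \<omega> + b * u' t \<omega>))) \<in> borel_measurable M"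
      using psi_meas[OF assms(3) good_lin[OF assms(1,2)] assms(4)] by simp
    show "(\<lambda>\<omega>. a * l2inner T (\<lambda>t. w t \<omega>) (kop T G (\<lambda>t. u t \<omega>)) + b * l2inner T (\<lambda>t. w t \<omega>) (kop T G (\<lambda>t. u' t \<omega>))) \<in> borel_measurable M"
      using psi_meas[OF assms(3,1,4)] psi_meas[OF assms(3,2,4)] by measurable
    show "AE \<omega> in M. l2inner T (\<lambda>t. w t \<omega>) (kop T G (\<lambda>t. a * u t \<omega> + b * u' t \<omega>)) =
        a * l2inner T (\<lambda>t. w t \<omega>) (kop T G (\<lambda>t. u t \<omega>)) + b * l2inner T (\<lambda>t. w t \<omega>) (kop T G (\<lambda>t. u' t \<omega>))"
      using good_AE_L2[OF assms(1)] good_AE_L2[OF assms(2)] good_AE_L2[OF assms(3)]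
    proof eventually_elim
      case (elim \<omega>)
      show ?case by (rule psi_path_lin2[OF assms(4) elim T0])
    qed
  qed
  also have "\<dots> = a * Psi M T G w u + b * Psi M T G w u'"
    unfolding Psi_def using Psi_int[OF assms(3,1,4)] Psi_int[OF assms(3,2,4)] by simp
  finally show ?thesis .
qed

end

lemma abs_integral_le_AE:
  fixes f g :: "'b \<Rightarrow> real"
  assumes "integrable N f" "integrable N g" "AE x in N. \<bar>f x\<bar> \<le> g x"
  shows "\<bar>\<integral>x. f x \<partial>N\<bar> \<le> (\<integral>x. g x \<partial>N)"
proof -
  have "(\<integral>x. f x \<partial>N) \<le> (\<integral>x. g x \<partial>N)"
    by (rule integral_mono_AE[OF assms(1,2)]) (use assms(3) in \<open>auto elim: AE_mp\<close>)
  moreover have "(\<integral>x. - f x \<partial>N) \<le> (\<integral>x. g x \<partial>N)"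
    by (rule integral_mono_AE) (use assms in \<open>auto elim: AE_mp\<close>)
  ultimately show ?thesis by simp
qed

lemma quad_zero:
  fixes L Q :: real
  assumes "\<And>e. e * L + e\<^sup>2 * Q \<le> 0"
  shows "L = 0"
proof (rule ccontr)
  assume L: "L \<noteq> 0"
  define e where "e = L / (\<bar>Q\<bar> + 1)"
  have q: "\<bar>Q\<bar> + 1 > 0" by simp
  have c1: "e * L + e\<^sup>2 * Q \<ge> e * L - e\<^sup>2 * \<bar>Q\<bar>"
    by (smt (verit) abs_ge_minus_self mult_left_mono zero_le_power2 mult_minus_right)
  have c2: "e * L - e\<^sup>2 * \<bar>Q\<bar> = L\<^sup>2 / (\<bar>Q\<bar> + 1)\<^sup>2"
  proof -
    define q where "q = \<bar>Q\<bar> + 1"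
    have q0: "q > 0" by (simp add: q_def)
    have a: "e * L = L\<^sup>2 * q / q\<^sup>2" unfolding e_def q_def[symmetric] using q0 by (simp add: power2_eq_square)
    have b: "e\<^sup>2 * \<bar>Q\<bar> = L\<^sup>2 * \<bar>Q\<bar> / q\<^sup>2" unfolding e_def q_def[symmetric] by (simp add: power_divide)
    have "e * L - e\<^sup>2 * \<bar>Q\<bar> = L\<^sup>2 * (q - \<bar>Q\<bar>) / q\<^sup>2" unfolding a b by (simp add: diff_divide_distrib right_diff_distrib)
    also have "q - \<bar>Q\<bar> = 1" by (simp add: q_def)
    finally show ?thesis by (simp add: q_def)
  qed
  have c3: "L\<^sup>2 / (\<bar>Q\<bar> + 1)\<^sup>2 > 0" using L by simp
  show False using assms[of e] c1 c2 c3 by linarith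
qed

definition lc :: "real \<Rightarrow> (real \<Rightarrow> 'a \<Rightarrow> real) \<Rightarrow> real \<Rightarrow> (real \<Rightarrow> 'a \<Rightarrow> real) \<Rightarrow> real \<Rightarrow> 'a \<Rightarrow> real" where
  "lc a x b y = (\<lambda>t \<omega>. a * x t \<omega> + b * y t \<omega>)"

context ctx begin

definition nrm where "nrm u = sqrt (Phi M T u u)"

lemma nrm_nonneg: "0 \<le> nrm u" unfolding nrm_def using Phi_self_nonneg[of u] by simp
lemma nrm_sq: "(nrm u)\<^sup>2 = Phi M T u u" unfolding nrm_def using Phi_self_nonneg[of u] by simp

lemma good_lc: "good M T x \<Longrightarrow> good M T y \<Longrightarrow> good M T (lc a x b y)"
  unfolding lc_def by (rule good_lin)

lemma Phi_lc1: "good M T x \<Longrightarrow> good M T y \<Longrightarrow> good M T w \<Longrightarrow> Phi M T (lc a x b y) w = a * Phi M T x w + b * Phi M T y w"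
  unfolding lc_def by (rule Phi_lin1)
lemma Phi_lc2: "good M T x \<Longrightarrow> good M T y \<Longrightarrow> good M T w \<Longrightarrow> Phi M T w (lc a x b y) = a * Phi M T w x + b * Phi M T w y"
  unfolding lc_def by (rule Phi_lin2)
lemma Psi_lc1: "good M T x \<Longrightarrow> good M T y \<Longrightarrow> good M T w \<Longrightarrow> KB T G K \<Longrightarrow> Psi M T G (lc a x b y) w = a * Psi M T G x w + b * Psi M T G y w"
  unfolding lc_def by (rule Psi_lin1)
lemma Psi_lc2: "good M T x \<Longrightarrow> good M T y \<Longrightarrow> good M T w \<Longrightarrow> KB T G K \<Longrightarrow> Psi M T G w (lc a x b y) = a * Psi M T G w x + b * Psi M T G w y"
  unfolding lc_def by (rule Psi_lin2)

lemma Phi_bound: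
  assumes "good M T u" "good M T w"
  shows "\<bar>Phi M T u w\<bar> \<le> nrm u * nrm w"
proof -
  have "\<bar>Phi M T u w\<bar> \<le> sqrt (Phi M T u u * Phi M T w w)"
  proof (rule amgm_bound[OF Phi_self_nonneg Phi_self_nonneg])
    fix c :: real assume c: "c > 0"
    have "\<bar>Phi M T u w\<bar> \<le> (\<integral>\<omega>. (c * nsq u \<omega> + nsq w \<omega> / c) / 2 \<partial>M)"
      unfolding Phi_def
    proof (rule abs_integral_le_AE[OF Phi_int[OF assms]])
      show "integrable M (\<lambda>\<omega>. (c * nsq u \<omega> + nsq w \<omega> / c) / 2)"
        using good_nsq_int[OF assms(1)] good_nsq_int[OF assms(2)] by auto
      show "AE \<omega> in M. \<bar>l2inner T (\<lambda>t. u t \<omega>) (\<lambda>t. w t \<omega>)\<bar> \<le> (c * nsq u \<omega> + nsq w \<omega> / c) / 2"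
        using good_AE_L2[OF assms(1)] good_AE_L2[OF assms(2)]
        by eventually_elim (rule l2inner_bound[OF _ _ c])
    qed
    also have "\<dots> = (c * Phi M T u u + Phi M T w w / c) / 2"
      unfolding Phi_def using good_nsq_int[OF assms(1)] good_nsq_int[OF assms(2)] by simp
    finally show "\<bar>Phi M T u w\<bar> \<le> (c * Phi M T u u + Phi M T w w / c) / 2" .
  qed
  thus ?thesis unfolding nrm_def by (simp add: real_sqrt_mult)
qed

lemma Psi_bound:
  assumes "good M T u" "good M T w" "KB T G K"
  shows "\<bar>Psi M T G u w\<bar> \<le> sqrt (T * K) * nrm u * nrm w"
proof -
  have K: "K \<ge> 0" using assms(3) by (simp add: KB_def)
  have "\<bar>Psi M T G u w\<bar> \<le> sqrt (Phi M T u u * (T * K * Phi M T w w))"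
  proof (rule amgm_bound[OF Phi_self_nonneg])
    show "0 \<le> T * K * Phi M T w w" using K T0 Phi_self_nonneg by simp
    fix c :: real assume c: "c > 0"
    have "\<bar>Psi M T G u w\<bar> \<le> (\<integral>\<omega>. (c * nsq u \<omega> + T * K * nsq w \<omega> / c) / 2 \<partial>M)"
      unfolding Psi_def
    proof (rule abs_integral_le_AE[OF Psi_int[OF assms]])
      show "integrable M (\<lambda>\<omega>. (c * nsq u \<omega> + T * K * nsq w \<omega> / c) / 2)"
        using good_nsq_int[OF assms(1)] good_nsq_int[OF assms(2)] by auto
      show "AE \<omega> in M. \<bar>l2inner T (\<lambda>t. u t \<omega>) (kop T G (\<lambda>t. w t \<omega>))\<bar> \<le> (c * nsq u \<omega> + T * K * nsq w \<omega> / c) / 2"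
        using good_AE_L2[OF assms(1)] good_AE_L2[OF assms(2)]
        by eventually_elim (rule psi_path_bound[OF assms(3) _ _ T0 c])
    qed
    also have "\<dots> = (c * Phi M T u u + T * K * Phi M T w w / c) / 2"
      unfolding Phi_def using good_nsq_int[OF assms(1)] good_nsq_int[OF assms(2)] by simp
    finally show "\<bar>Psi M T G u w\<bar> \<le> (c * Phi M T u u + T * K * Phi M T w w / c) / 2" .
  qed
  also have "\<dots> = sqrt (T * K) * nrm u * nrm w"
    unfolding nrm_def by (simp add: real_sqrt_mult)
  finally show ?thesis .
qed

lemma Psi_nonneg:
  assumes "admissible_kernel T G" "good M T u"
  shows "0 \<le> Psi M T G u u"
  unfolding Psi_def
proof (rule integral_nonneg_AE)
  show "AE \<omega> in M. 0 \<le> l2inner T (\<lambda>t. u t \<omega>) (kop T G (\<lambda>t. u t \<omega>))"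
    using good_AE_L2[OF assms(2)]
  proof eventually_elim
    case (elim \<omega>)
    show ?case by (rule nonneg_psi[OF assms(1) elim T0])
  qed
qed

lemma nrm_tri:
  assumes "good M T x" "good M T y"
  shows "nrm (lc 1 x 1 y) \<le> nrm x + nrm y"
proof -
  have "Phi M T (lc 1 x 1 y) (lc 1 x 1 y) = Phi M T x x + Phi M T x y + Phi M T y x + Phi M T y y"
    using Phi_lc1[OF assms good_lc[OF assms], of 1 1] Phi_lc2[OF assms assms(1), of 1 1] Phi_lc2[OF assms assms(2), of 1 1]
    by simp
  also have "\<dots> \<le> (nrm x)\<^sup>2 + 2 * (nrm x * nrm y) + (nrm y)\<^sup>2"
    using Phi_bound[OF assms] Phi_bound[OF assms(2,1)] by (auto simp: nrm_sq mult.commute abs_le_iff)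
  also have "\<dots> = (nrm x + nrm y)\<^sup>2" by (simp add: power2_eq_square algebra_simps)
  finally have "(nrm (lc 1 x 1 y))\<^sup>2 \<le> (nrm x + nrm y)\<^sup>2" by (simp add: nrm_sq)
  thus ?thesis using nrm_nonneg by (meson add_nonneg_nonneg power2_le_imp_le)
qed

lemma nrm_scale:
  assumes "good M T x"
  shows "nrm (lc c x 0 x) = \<bar>c\<bar> * nrm x"
proof -
  have "Phi M T (lc c x 0 x) (lc c x 0 x) = c\<^sup>2 * Phi M T x x"
    using Phi_lc1[OF assms assms good_lc[OF assms assms], of c 0] Phi_lc2[OF assms assms assms, of c 0]
    by (simp add: power2_eq_square)
  thus ?thesis unfolding nrm_def by (simp add: real_sqrt_mult)
qed

lemma lc_sum:
  assumes "finite A" "\<And>j. j \<in> A \<Longrightarrow> good M T (x j)"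
  shows "good M T (\<lambda>t \<omega>. \<Sum>j\<in>A. x j t \<omega>) \<and> nrm (\<lambda>t \<omega>. \<Sum>j\<in>A. x j t \<omega>) \<le> (\<Sum>j\<in>A. nrm (x j))"
  using assms
proof (induction A rule: finite_induct)
  case empty
  have "nrm (\<lambda>t \<omega>. 0) = 0" unfolding nrm_def Phi_def l2inner_def by simp
  thus ?case using good_zero by simp
next
  case (insert j A)
  have gj: "good M T (x j)" using insert by simp
  have IH: "good M T (\<lambda>t \<omega>. \<Sum>j\<in>A. x j t \<omega>)" "nrm (\<lambda>t \<omega>. \<Sum>j\<in>A. x j t \<omega>) \<le> (\<Sum>j\<in>A. nrm (x j))"
    using insert by auto
  have eq: "(\<lambda>t \<omega>. \<Sum>j\<in>insert j A. x j t \<omega>) = lc 1 (x j) 1 (\<lambda>t \<omega>. \<Sum>j\<in>A. x j t \<omega>)"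
    using insert by (simp add: lc_def)
  show ?case unfolding eq using good_lc[OF gj IH(1)] nrm_tri[OF gj IH(1)] IH(2) insert by simp
qed

lemma lin_sum:
  assumes "\<And>x y a b. good M T x \<Longrightarrow> good M T y \<Longrightarrow> L (lc a x b y) = a * L x + b * L y"
    and "finite A" "\<And>j. j \<in> A \<Longrightarrow> good M T (x j)"
  shows "L (\<lambda>t \<omega>. \<Sum>j\<in>A. x j t \<omega>) = (\<Sum>j\<in>A. L (x j))"
  using assms(2,3)
proof (induction A rule: finite_induct)
  case empty
  define z where "z = (\<lambda>(t::real) (\<omega>::'a). 0::real)"
  have gz: "good M T z" unfolding z_def by (rule good_zero)
  have e: "lc 1 z 1 z = z" by (simp add: lc_def z_def)
  have "L z + L z = L (lc 1 z 1 z)" using assms(1)[OF gz gz, of 1 1] by simp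
  also have "\<dots> = L z" unfolding e ..
  finally have "L z = 0" by simp
  thus ?case by (simp add: z_def)
next
  case (insert j A)
  have gj: "good M T (x j)" using insert by simp
  have IH: "good M T (\<lambda>t \<omega>. \<Sum>j\<in>A. x j t \<omega>)" using lc_sum insert by auto
  have eq: "(\<lambda>t \<omega>. \<Sum>j\<in>insert j A. x j t \<omega>) = lc 1 (x j) 1 (\<lambda>t \<omega>. \<Sum>j\<in>A. x j t \<omega>)"
    using insert by (simp add: lc_def)
  show ?case unfolding eq using assms(1)[OF gj IH, of 1 1] insert by simp
qed

lemma lin_scale:
  assumes "\<And>x y a b. good M T x \<Longrightarrow> good M T y \<Longrightarrow> L (lc a x b y) = a * L x + b * L y"
    and "good M T x"
  shows "L (\<lambda>t \<omega>. x t \<omega> / c) = L x / c"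
proof -
  have "(\<lambda>t \<omega>. x t \<omega> / c) = lc (1/c) x 0 x" by (simp add: lc_def)
  thus ?thesis using assms(1)[OF assms(2) assms(2), of "1/c" 0] by simp
qed

lemma good_avg:
  assumes "finite A" "\<And>j. j \<in> A \<Longrightarrow> good M T (x j)"
  shows "good M T (\<lambda>t \<omega>. (\<Sum>j\<in>A. x j t \<omega>) / c)"
proof -
  have g: "good M T (\<lambda>t \<omega>. \<Sum>j\<in>A. x j t \<omega>)" using lc_sum[OF assms] by simp
  have "(\<lambda>t \<omega>. (\<Sum>j\<in>A. x j t \<omega>) / c) = lc (1/c) (\<lambda>t \<omega>. \<Sum>j\<in>A. x j t \<omega>) 0 (\<lambda>t \<omega>. \<Sum>j\<in>A. x j t \<omega>)"
    by (simp add: lc_def)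
  thus ?thesis using good_lc[OF g g] by simp
qed

lemma nrm_avg:
  assumes "finite A" "\<And>j. j \<in> A \<Longrightarrow> good M T (x j)" "\<And>j. j \<in> A \<Longrightarrow> nrm (x j) \<le> B" "c > 0" "real (card A) \<le> c" "0 \<le> B"
  shows "nrm (\<lambda>t \<omega>. (\<Sum>j\<in>A. x j t \<omega>) / c) \<le> B"
proof -
  have g: "good M T (\<lambda>t \<omega>. \<Sum>j\<in>A. x j t \<omega>)" and n: "nrm (\<lambda>t \<omega>. \<Sum>j\<in>A. x j t \<omega>) \<le> (\<Sum>j\<in>A. nrm (x j))"
    using lc_sum[OF assms(1,2)] by auto
  have eq: "(\<lambda>t \<omega>. (\<Sum>j\<in>A. x j t \<omega>) / c) = lc (1/c) (\<lambda>t \<omega>. \<Sum>j\<in>A. x j t \<omega>) 0 (\<lambda>t \<omega>. \<Sum>j\<in>A. x j t \<omega>)"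
    by (simp add: lc_def)
  have "(\<Sum>j\<in>A. nrm (x j)) \<le> card A * B" using sum_bounded_above[of A "\<lambda>j. nrm (x j)" B] assms(3) by simp
  have B: "0 \<le> B \<or> A = {}" using assms(3) nrm_nonneg by (meson ex_in_conv order.trans)
  have "nrm (\<lambda>t \<omega>. (\<Sum>j\<in>A. x j t \<omega>) / c) = nrm (\<lambda>t \<omega>. \<Sum>j\<in>A. x j t \<omega>) / c"
    unfolding eq nrm_scale[OF g] using assms(4) by simp
  also have "\<dots> \<le> (card A * B) / c"
    using n \<open>(\<Sum>j\<in>A. nrm (x j)) \<le> card A * B\<close> assms(4) by (simp add: divide_right_mono)
  also have "\<dots> \<le> B"
  proof (cases "A = {}")
    case True thus ?thesis using assms(4,6) by simp  
  next
    case False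
    hence "B \<ge> 0" using B by simp
    thus ?thesis using assms(4,5) mult_left_mono[of "real (card A)" c B] by (simp add: field_simps)
  qed
  finally show ?thesis .
qed

end

context ctx begin

lemma psi2_meas:
  assumes "good M T u" "good M T w" "KB T G K" "KB T G' K'"
  shows "(\<lambda>\<omega>. l2inner T (\<lambda>t. u t \<omega>) (\<lambda>t. kop T G (\<lambda>t. w t \<omega>) t + kop T G' (\<lambda>t. w t \<omega>) t)) \<in> borel_measurable M"
proof -
  have [measurable]: "(\<lambda>(s,\<omega>). ui T u s \<omega>) \<in> borel_measurable (lborel \<Otimes>\<^sub>M M)"
    "(\<lambda>(s,\<omega>). ui T w s \<omega>) \<in> borel_measurable (lborel \<Otimes>\<^sub>M M)"
    using good_meas assms by auto
  have [measurable]: "(\<lambda>(t,s). G t s) \<in> borel_measurable (lborel \<Otimes>\<^sub>M lborel)"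
    using KB_meas2[OF assms(3)]
    by (simp add: measurable_cong_sets[OF sets_pair_measure_cong[OF sets_lborel sets_lborel] refl])
  have [measurable]: "(\<lambda>(t,s). G' t s) \<in> borel_measurable (lborel \<Otimes>\<^sub>M lborel)"
    using KB_meas2[OF assms(4)]
    by (simp add: measurable_cong_sets[OF sets_pair_measure_cong[OF sets_lborel sets_lborel] refl])
  have "(\<lambda>\<omega>. \<integral>s. ui T u s \<omega> * (indicator {0..T} s * ((\<integral>r. G s r * ui T w r \<omega> \<partial>lborel) + (\<integral>r. G' s r * ui T w r \<omega> \<partial>lborel))) \<partial>lborel) \<in> borel_measurable M"
    by measurable
  moreover have "\<And>\<omega>. l2inner T (\<lambda>t. u t \<omega>) (\<lambda>t. kop T G (\<lambda>t. w t \<omega>) t + kop T G' (\<lambda>t. w t \<omega>) t) =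
      (\<integral>s. ui T u s \<omega> * (indicator {0..T} s * ((\<integral>r. G s r * ui T w r \<omega> \<partial>lborel) + (\<integral>r. G' s r * ui T w r \<omega> \<partial>lborel))) \<partial>lborel)"
    unfolding l2inner_eq kop_eq_int ind_ui by (simp add: ind_def)
  ultimately show ?thesis by simp
qed

lemma Jexp:
  assumes gu: "good M T u" and gm: "good M T m" and gbi: "good M T bi" and gb0: "good M T b0"
    and ci: "integrable M ci"
    and K1: "KB T A1 K1" and K2: "KB T A2h K2" and K3: "KB T A3 K3" and K4: "KB T (adj_kernel A3) K4"
  shows "Jobj M T A1 lam A2h A3 b0 bi ci u m =
     - Psi M T A1 m m - (lam * Phi M T u u + Psi M T A2h u u) - (Psi M T A3 u m + Psi M T (adj_kernel A3) u m)
     + Phi M T bi u + Phi M T b0 m + (\<integral>\<omega>. ci \<omega> \<partial>M)"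
proof -
  let ?f1 = "\<lambda>\<omega>. l2inner T (\<lambda>t. m t \<omega>) (kop T A1 (\<lambda>t. m t \<omega>))"
  let ?f2 = "\<lambda>\<omega>. l2inner T (\<lambda>t. u t \<omega>) (\<lambda>t. u t \<omega>)"
  let ?f3 = "\<lambda>\<omega>. l2inner T (\<lambda>t. u t \<omega>) (kop T A2h (\<lambda>t. u t \<omega>))"
  let ?f4 = "\<lambda>\<omega>. l2inner T (\<lambda>t. u t \<omega>) (kop T A3 (\<lambda>t. m t \<omega>))"
  let ?f5 = "\<lambda>\<omega>. l2inner T (\<lambda>t. u t \<omega>) (kop T (adj_kernel A3) (\<lambda>t. m t \<omega>))"
  let ?f6 = "\<lambda>\<omega>. l2inner T (\<lambda>t. bi t \<omega>) (\<lambda>t. u t \<omega>)"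
  let ?f7 = "\<lambda>\<omega>. l2inner T (\<lambda>t. b0 t \<omega>) (\<lambda>t. m t \<omega>)"
  have i1: "integrable M ?f1" by (rule Psi_int[OF gm gm K1])
  have i2: "integrable M ?f2" by (rule Phi_int[OF gu gu])
  have i3: "integrable M ?f3" by (rule Psi_int[OF gu gu K2])
  have i4: "integrable M ?f4" by (rule Psi_int[OF gu gm K3])
  have i5: "integrable M ?f5" by (rule Psi_int[OF gu gm K4])
  have i6: "integrable M ?f6" by (rule Phi_int[OF gbi gu])
  have i7: "integrable M ?f7" by (rule Phi_int[OF gb0 gm])
  have "Jobj M T A1 lam A2h A3 b0 bi ci u m =
    (\<integral>\<omega>. - ?f1 \<omega> - (lam * ?f2 \<omega> + ?f3 \<omega>) - (?f4 \<omega> + ?f5 \<omega>) + ?f6 \<omega> + ?f7 \<omega> + ci \<omega> \<partial>M)"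
    unfolding Jobj_def Let_def
  proof (rule integral_cong_AE)
    have [measurable]: "?f1 \<in> borel_measurable M" "?f2 \<in> borel_measurable M" "?f3 \<in> borel_measurable M"
      "?f6 \<in> borel_measurable M" "?f7 \<in> borel_measurable M" "ci \<in> borel_measurable M"
      "?f4 \<in> borel_measurable M" "?f5 \<in> borel_measurable M"
      using i1 i2 i3 i4 i5 i6 i7 ci by auto
    have [measurable]: "(\<lambda>\<omega>. l2inner T (\<lambda>t. u t \<omega>) (\<lambda>t. kop T A3 (\<lambda>t. m t \<omega>) t + kop T (adj_kernel A3) (\<lambda>t. m t \<omega>) t)) \<in> borel_measurable M"
      by (rule psi2_meas[OF gu gm K3 K4])
    show "(\<lambda>\<omega>. - ?f1 \<omega> - (lam * ?f2 \<omega> + ?f3 \<omega>) - l2inner T (\<lambda>t. u t \<omega>) (\<lambda>t. kop T A3 (\<lambda>t. m t \<omega>) t + kop T (adj_kernel A3) (\<lambda>t. m t \<omega>) t) + ?f6 \<omega> + ?f7 \<omega> + ci \<omega>) \<in> borel_measurable M"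
      by measurable
    show "(\<lambda>\<omega>. - ?f1 \<omega> - (lam * ?f2 \<omega> + ?f3 \<omega>) - (?f4 \<omega> + ?f5 \<omega>) + ?f6 \<omega> + ?f7 \<omega> + ci \<omega>) \<in> borel_measurable M"
      by measurable
    show "AE \<omega> in M. - ?f1 \<omega> - (lam * ?f2 \<omega> + ?f3 \<omega>) - l2inner T (\<lambda>t. u t \<omega>) (\<lambda>t. kop T A3 (\<lambda>t. m t \<omega>) t + kop T (adj_kernel A3) (\<lambda>t. m t \<omega>) t) + ?f6 \<omega> + ?f7 \<omega> + ci \<omega> =
        - ?f1 \<omega> - (lam * ?f2 \<omega> + ?f3 \<omega>) - (?f4 \<omega> + ?f5 \<omega>) + ?f6 \<omega> + ?f7 \<omega> + ci \<omega>"
      using good_AE_L2[OF gu] good_AE_L2[OF gm]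
    proof eventually_elim
      case (elim \<omega>)
      have "l2inner T (\<lambda>t. u t \<omega>) (\<lambda>t. 1 * kop T A3 (\<lambda>t. m t \<omega>) t + 1 * kop T (adj_kernel A3) (\<lambda>t. m t \<omega>) t) = ?f4 \<omega> + ?f5 \<omega>"
        using l2inner_lin2[OF L2_kop(1)[OF K3 elim(2) T0] L2_kop(1)[OF K4 elim(2) T0] elim(1), of 1 1] by simp
      thus ?case by simp
    qed
  qed
  also have "\<dots> = - Psi M T A1 m m - (lam * Phi M T u u + Psi M T A2h u u) - (Psi M T A3 u m + Psi M T (adj_kernel A3) u m)
     + Phi M T bi u + Phi M T b0 m + (\<integral>\<omega>. ci \<omega> \<partial>M)"
    unfolding Phi_def Psi_def using i1 i2 i3 i4 i5 i6 i7 ci by simp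
  finally show ?thesis .
qed

lemma sqnorm_le_const:
  assumes "\<And>t. t \<in> {0..T} \<Longrightarrow> (\<integral>\<^sup>+ \<omega>. ennreal ((u t \<omega>)\<^sup>2) \<partial>M) \<le> c"
  shows "sqnorm2T M T u \<le> c * ennreal T"
proof -
  have "sqnorm2T M T u \<le> (\<integral>\<^sup>+ t. c * indicator {0..T} t \<partial>lborel)"
    unfolding sqnorm2T_def
    by (rule nn_integral_mono) (use assms in \<open>auto split: split_indicator\<close>)
  also have "\<dots> = c * ennreal T" using T0 by (simp add: nn_integral_cmult_indicator emeasure_lborel_Icc)
  finally show ?thesis .
qed

end

lemma adm_lc:
  assumes "x \<in> admissible_controls M T F" "y \<in> admissible_controls M T F" "ctx M T"
    "space (F T) = space M" "sets (F T) \<subseteq> sets M"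
  shows "lc a x b y \<in> admissible_controls M T F"
proof -
  interpret ctx M T by fact
  have g: "good M T (lc a x b y)" using good_lc[OF adm_good[OF assms(1,4,5)] adm_good[OF assms(2,4,5)]] .
  have "sqnorm2T M T (lc a x b y) < \<infinity>" using good_sqnorm[OF g] by simp
  moreover have "prog_meas T F (lc a x b y)"
    unfolding prog_meas_def lc_def
  proof
    fix t assume t: "t \<in> {0..T}"
    have [measurable]: "(\<lambda>(s,\<omega>). x s \<omega>) \<in> borel_measurable (restrict_space borel {0..t} \<Otimes>\<^sub>M F t)"
      "(\<lambda>(s,\<omega>). y s \<omega>) \<in> borel_measurable (restrict_space borel {0..t} \<Otimes>\<^sub>M F t)"
      using assms(1,2) t unfolding admissible_controls_def prog_meas_def by auto
    show "(\<lambda>(s,\<omega>). a * x s \<omega> + b * y s \<omega>) \<in> borel_measurable (restrict_space borel {0..t} \<Otimes>\<^sub>M F t)"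
      by measurable
  qed
  ultimately show ?thesis unfolding admissible_controls_def by simp
qed

lemma adm_zero: "(\<lambda>t \<omega>. 0) \<in> admissible_controls M T F"
  unfolding admissible_controls_def prog_meas_def sqnorm2T_def by simp

lemma adm_sum:
  assumes "finite A" "\<And>j. j \<in> A \<Longrightarrow> x j \<in> admissible_controls M T F" "ctx M T"
    "space (F T) = space M" "sets (F T) \<subseteq> sets M"
  shows "(\<lambda>t \<omega>. (\<Sum>j\<in>A. x j t \<omega>) / c) \<in> admissible_controls M T F"
proof -
  have s: "(\<lambda>t \<omega>. \<Sum>j\<in>A. x j t \<omega>) \<in> admissible_controls M T F"
    using assms(1,2)
  proof (induction A rule: finite_induct)
    case empty thus ?case using adm_zero by simp
  next
    case (insert j A)
    have "(\<lambda>t \<omega>. \<Sum>j\<in>insert j A. x j t \<omega>) = lc 1 (x j) 1 (\<lambda>t \<omega>. \<Sum>j\<in>A. x j t \<omega>)"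
      using insert by (simp add: lc_def)
    moreover have "lc 1 (x j) 1 (\<lambda>t \<omega>. \<Sum>j\<in>A. x j t \<omega>) \<in> admissible_controls M T F"
      by (rule adm_lc) (use insert assms(3-5) in auto)
    ultimately show ?case by simp
  qed
  have "(\<lambda>t \<omega>. (\<Sum>j\<in>A. x j t \<omega>) / c) = lc (1/c) (\<lambda>t \<omega>. \<Sum>j\<in>A. x j t \<omega>) 0 (\<lambda>t \<omega>. \<Sum>j\<in>A. x j t \<omega>)"
    by (simp add: lc_def)
  moreover have "lc (1/c) (\<lambda>t \<omega>. \<Sum>j\<in>A. x j t \<omega>) 0 (\<lambda>t \<omega>. \<Sum>j\<in>A. x j t \<omega>) \<in> admissible_controls M T F"
    by (rule adm_lc) (use s assms(3-5) in auto)
  ultimately show ?thesis by simp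
qed

context ctx begin
lemma lin_avg:
  assumes "\<And>x y a b. good M T x \<Longrightarrow> good M T y \<Longrightarrow> L (lc a x b y) = a * L x + b * L y"
    and "finite A" "\<And>j. j \<in> A \<Longrightarrow> good M T (x j)"
  shows "L (\<lambda>t \<omega>. (\<Sum>j\<in>A. x j t \<omega>) / c) = (\<Sum>j\<in>A. L (x j)) / c"
proof -
  have g: "good M T (\<lambda>t \<omega>. \<Sum>j\<in>A. x j t \<omega>)" using lc_sum[OF assms(2,3)] by simp
  have "L (\<lambda>t \<omega>. (\<Sum>j\<in>A. x j t \<omega>) / c) = L (\<lambda>t \<omega>. \<Sum>j\<in>A. x j t \<omega>) / c"
    using lin_scale[of L, OF assms(1) g] by simp
  also have "\<dots> = (\<Sum>j\<in>A. L (x j)) / c" using lin_sum[of L, OF assms(1) assms(2,3)] by simp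
  finally show ?thesis .
qed
end

lemma mono3: "0 \<le> (k::real) \<Longrightarrow> 0 \<le> a \<Longrightarrow> a \<le> a' \<Longrightarrow> 0 \<le> b \<Longrightarrow> b \<le> b' \<Longrightarrow> k*a*b \<le> k*a'*b'"
  by (metis mult_left_mono mult_mono mult_nonneg_nonneg order_trans mult.assoc)

theorem mainTheorem16:
  fixes M :: "'a measure" and T :: real and F :: "real \<Rightarrow> 'a measure"
    and A1 A2h A3 :: "real \<Rightarrow> real \<Rightarrow> real" and lam :: real
    and b :: "nat \<Rightarrow> real \<Rightarrow> 'a \<Rightarrow> real" and binf :: "real \<Rightarrow> 'a \<Rightarrow> real"
    and c :: "nat \<Rightarrow> 'a \<Rightarrow> real" and h :: "real \<Rightarrow> real"
    and nu :: "real \<Rightarrow> 'a \<Rightarrow> real" and v :: "nat \<Rightarrow> real \<Rightarrow> 'a \<Rightarrow> real"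
    and Ub :: "(real \<Rightarrow> 'a \<Rightarrow> real) set"
  assumes "prob_space M" and "T > 0"
    and "usual_filtration M T F"
    and "admissible_kernel T A1" and "admissible_kernel T A3"
    and "lam > 0" and "admissible_kernel T A2h"
    and "\<And>i. b i \<in> admissible_controls M T F"
    and "\<And>i. i \<ge> 1 \<Longrightarrow> integrable M (c i)"
    and "binf \<in> admissible_controls M T F"
    and "\<forall>x\<ge>0. h x \<ge> 0" and "\<exists>K. \<forall>x\<ge>0. h x \<le> K" and "(h \<longlongrightarrow> 0) at_top"
    and "\<And>N t. N \<ge> 1 \<Longrightarrow> t \<in> {0..T} \<Longrightarrow>
           (\<integral>\<^sup>+ \<omega>. ennreal (((\<Sum>i\<in>{1..N}. b i t \<omega>) / real N - binf t \<omega>)\<^sup>2) \<partial>M) \<le> ennreal (h (real N))"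
    and "mfg_nash M T F A1 lam A2h A3 b c nu v"
    and "Ub \<subseteq> admissible_controls M T F"
    and "\<And>i. i \<ge> 1 \<Longrightarrow> v i \<in> Ub"
    and "(SUP u\<in>Ub. sqnorm2T M T u) < \<infinity>"
  shows "\<exists>C>0. \<forall>N\<ge>2. \<forall>i\<in>{1..N}.
           ereal (JN M T A1 lam A2h A3 b c N i (v i) v) \<le> (SUP u\<in>Ub. ereal (JN M T A1 lam A2h A3 b c N i u v)) \<and>
           (SUP u\<in>Ub. ereal (JN M T A1 lam A2h A3 b c N i u v))
             \<le> ereal (JN M T A1 lam A2h A3 b c N i (v i) v + C * max (sqrt (h (real N))) (1 / real N))"
proof -
  interpret ctx M T using assms(1,2) unfolding ctx_def ctx_axioms_def by simp
  have sF: "space (F T) = space M" "sets (F T) \<subseteq> sets M"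
    using assms(3) T0 unfolding usual_filtration_def by auto
  define adm where "adm = admissible_controls M T F"
  have gA: "\<And>u. u \<in> adm \<Longrightarrow> good M T u" using adm_good sF unfolding adm_def by blast
  have admlc: "\<And>x y a b. x \<in> adm \<Longrightarrow> y \<in> adm \<Longrightarrow> lc a x b y \<in> adm"
    unfolding adm_def by (rule adm_lc) (use sF ctx_axioms in \<open>auto simp: ctx_def\<close>)
  have admavg: "\<And>(x::nat \<Rightarrow> real \<Rightarrow> 'a \<Rightarrow> real) A c. finite A \<Longrightarrow> (\<And>j. j \<in> A \<Longrightarrow> x j \<in> adm) \<Longrightarrow> (\<lambda>t \<omega>. (\<Sum>j\<in>A. x j t \<omega>) / c) \<in> adm"
    unfolding adm_def by (rule adm_sum) (use sF ctx_axioms in \<open>auto simp: ctx_def\<close>)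
  obtain K1 where K1: "KB T A1 K1" using adm_KB(1)[OF assms(4)] by blast
  obtain K2 where K2: "KB T A2h K2" using adm_KB(1)[OF assms(7)] by blast
  obtain K3 where K3: "KB T A3 K3" using adm_KB(1)[OF assms(5)] by blast
  obtain K4 where K4: "KB T (adj_kernel A3) K4" using adm_KB(2)[OF assms(5)] by blast
  have nuA: "nu \<in> adm" and vA: "\<And>i. i \<ge> 1 \<Longrightarrow> v i \<in> adm"
    and NE: "\<And>i w. i \<ge> 1 \<Longrightarrow> w \<in> adm \<Longrightarrow> Jinf M T A1 lam A2h A3 b c i w nu \<le> Jinf M T A1 lam A2h A3 b c i (v i) nu"
    and LIM: "(\<lambda>N. SUP t\<in>{0..T}. \<integral>\<^sup>+ \<omega>. ennreal (((\<Sum>j\<in>{1..N}. v j t \<omega>) / real N - nu t \<omega>)\<^sup>2) \<partial>M) \<longlonglongrightarrow> 0"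
    using assms(15) unfolding mfg_nash_def adm_def by auto
  have bA: "\<And>i. b i \<in> adm" using assms(8) unfolding adm_def by simp
  have binfA: "binf \<in> adm" using assms(10) unfolding adm_def by simp
  define P3s where "P3s x y = Psi M T A3 x y + Psi M T (adj_kernel A3) x y" for x y
  have JinfE: "Jinf M T A1 lam A2h A3 b c i w nu = - Psi M T A1 nu nu - (lam * Phi M T w w + Psi M T A2h w w) - P3s w nu
     + Phi M T (b i) w + Phi M T (b 0) nu + (\<integral>\<omega>. c i \<omega> \<partial>M)" if "i \<ge> 1" "w \<in> adm" for i w
    unfolding Jinf_def P3s_def
    by (rule Jexp[OF gA[OF that(2)] gA[OF nuA] gA[OF bA] gA[OF bA] assms(9)[OF that(1)] K1 K2 K3 K4])
  have FOC: "-2*lam*Phi M T (v j) z - Psi M T A2h (v j) z - Psi M T A2h z (v j) - P3s z nu + Phi M T (b j) z = 0"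
    if j: "j \<ge> 1" and z: "z \<in> adm" for j z
  proof (rule quad_zero)
    fix e :: real
    define w where "w = lc 1 (v j) e z"
    have wA: "w \<in> adm" unfolding w_def by (rule admlc[OF vA[OF j] z])
    have gv: "good M T (v j)" using gA vA j by blast
    have gz: "good M T z" using gA z by blast
    have gw: "good M T w" using gA wA by blast
    have gn: "good M T nu" using gA nuA by blast
    have gb: "good M T (b j)" using gA bA by blast
    have e1: "Phi M T w w = Phi M T (v j) w + e * Phi M T z w" unfolding w_def[of ] using Phi_lc1[OF gv gz gw, of 1 e] w_def by simp
    have e2: "Phi M T (v j) w = Phi M T (v j) (v j) + e * Phi M T (v j) z" using Phi_lc2[OF gv gz gv, of 1 e] w_def by simp
    have e3: "Phi M T z w = Phi M T z (v j) + e * Phi M T z z" using Phi_lc2[OF gv gz gz, of 1 e] w_def by simp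
    have e4: "Phi M T z (v j) = Phi M T (v j) z" by (rule Phi_sym)
    have f1: "Psi M T A2h w w = Psi M T A2h (v j) w + e * Psi M T A2h z w" using Psi_lc1[OF gv gz gw K2, of 1 e] w_def by simp
    have f2: "Psi M T A2h (v j) w = Psi M T A2h (v j) (v j) + e * Psi M T A2h (v j) z" using Psi_lc2[OF gv gz gv K2, of 1 e] w_def by simp
    have f3: "Psi M T A2h z w = Psi M T A2h z (v j) + e * Psi M T A2h z z" using Psi_lc2[OF gv gz gz K2, of 1 e] w_def by simp
    have g1: "P3s w nu = P3s (v j) nu + e * P3s z nu"
      using Psi_lc1[OF gv gz gn K3, of 1 e] Psi_lc1[OF gv gz gn K4, of 1 e] w_def unfolding P3s_def by (simp add: algebra_simps)
    have h1: "Phi M T (b j) w = Phi M T (b j) (v j) + e * Phi M T (b j) z" using Phi_lc2[OF gv gz gb, of 1 e] w_def by simp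
    have "Jinf M T A1 lam A2h A3 b c j w nu - Jinf M T A1 lam A2h A3 b c j (v j) nu =
      e * (-2*lam*Phi M T (v j) z - Psi M T A2h (v j) z - Psi M T A2h z (v j) - P3s z nu + Phi M T (b j) z)
      + e\<^sup>2 * (- lam * Phi M T z z - Psi M T A2h z z)"
      unfolding JinfE[OF j wA] JinfE[OF j vA[OF j]] e1 e2 e3 e4 f1 f2 f3 g1 h1
      by (simp add: algebra_simps power2_eq_square)
    moreover have "Jinf M T A1 lam A2h A3 b c j w nu \<le> Jinf M T A1 lam A2h A3 b c j (v j) nu" by (rule NE[OF j wA])
    ultimately show "e * (-2*lam*Phi M T (v j) z - Psi M T A2h (v j) z - Psi M T A2h z (v j) - P3s z nu + Phi M T (b j) z)
      + e\<^sup>2 * (- lam * Phi M T z z - Psi M T A2h z z) \<le> 0" by simp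
  qed
  define m where "m N = (\<lambda>t \<omega>. (\<Sum>j\<in>{1..N}. v j t \<omega>) / real N)" for N
  define mb where "mb N = (\<lambda>t \<omega>. (\<Sum>j\<in>{1..N}. b j t \<omega>) / real N)" for N
  have mA: "m N \<in> adm" for N unfolding m_def by (rule admavg) (use vA in auto)
  have mbA: "mb N \<in> adm" for N unfolding mb_def by (rule admavg) (use bA in auto)
  have gvj: "\<And>j. j \<in> {1..N} \<Longrightarrow> good M T (v j)" for N using gA vA by auto
  have gbj: "\<And>j. j \<in> {1..N} \<Longrightarrow> good M T (b j)" for N using gA bA by auto
  have EN: "-2*lam*Phi M T (m N) z - Psi M T A2h (m N) z - Psi M T A2h z (m N) - P3s z nu + Phi M T (mb N) z = 0"
    if N: "N \<ge> 1" and z: "z \<in> adm" for N z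
  proof -
    have gz: "good M T z" using gA z by blast
    have s1: "Phi M T (m N) z = (\<Sum>j\<in>{1..N}. Phi M T (v j) z) / real N"
      unfolding m_def by (rule lin_avg[where L="\<lambda>x. Phi M T x z"]) (auto intro: Phi_lc1 gz gvj)
    have s2: "Psi M T A2h (m N) z = (\<Sum>j\<in>{1..N}. Psi M T A2h (v j) z) / real N"
      unfolding m_def by (rule lin_avg[where L="\<lambda>x. Psi M T A2h x z"]) (auto intro: Psi_lc1 gz gvj K2)
    have s3: "Psi M T A2h z (m N) = (\<Sum>j\<in>{1..N}. Psi M T A2h z (v j)) / real N"
      unfolding m_def by (rule lin_avg[where L="\<lambda>x. Psi M T A2h z x"]) (auto intro: Psi_lc2 gz gvj K2)
    have s4: "Phi M T (mb N) z = (\<Sum>j\<in>{1..N}. Phi M T (b j) z) / real N"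
      unfolding mb_def by (rule lin_avg[where L="\<lambda>x. Phi M T x z"]) (auto intro: Phi_lc1 gz gbj)
    have z0: "(\<Sum>j\<in>{1..N}. -2*lam*Phi M T (v j) z - Psi M T A2h (v j) z - Psi M T A2h z (v j) - P3s z nu + Phi M T (b j) z) = 0"
      by (rule sum.neutral) (use FOC z in auto)
    have "(\<Sum>j\<in>{1..N}. -2*lam*Phi M T (v j) z - Psi M T A2h (v j) z - Psi M T A2h z (v j) - P3s z nu + Phi M T (b j) z)
      = -2*lam*(\<Sum>j\<in>{1..N}. Phi M T (v j) z) - (\<Sum>j\<in>{1..N}. Psi M T A2h (v j) z) - (\<Sum>j\<in>{1..N}. Psi M T A2h z (v j)) - real N * P3s z nu + (\<Sum>j\<in>{1..N}. Phi M T (b j) z)"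
      by (simp add: sum.distrib sum_subtractf sum_distrib_left)
    hence "-2*lam*(\<Sum>j\<in>{1..N}. Phi M T (v j) z) - (\<Sum>j\<in>{1..N}. Psi M T A2h (v j) z) - (\<Sum>j\<in>{1..N}. Psi M T A2h z (v j)) - real N * P3s z nu + (\<Sum>j\<in>{1..N}. Phi M T (b j) z) = 0"
      using z0 by simp
    hence "(-2*lam*(\<Sum>j\<in>{1..N}. Phi M T (v j) z) - (\<Sum>j\<in>{1..N}. Psi M T A2h (v j) z) - (\<Sum>j\<in>{1..N}. Psi M T A2h z (v j)) - real N * P3s z nu + (\<Sum>j\<in>{1..N}. Phi M T (b j) z)) / real N = 0"
      by simp
    thus ?thesis unfolding s1 s2 s3 s4 using N by (simp add: field_simps)
  qed
  define d where "d N = lc 1 (m N) (-1) nu" for N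
  define e where "e N = lc 1 (mb N) (-1) binf" for N
  have dA: "d N \<in> adm" for N unfolding d_def by (rule admlc[OF mA nuA])
  have eA: "e N \<in> adm" for N unfolding e_def by (rule admlc[OF mbA binfA])
  have gd: "good M T (d N)" for N using gA dA by blast
  have ge: "good M T (e N)" for N using gA eA by blast
  have gm: "good M T (m N)" for N using gA mA by blast
  have gmb: "good M T (mb N)" for N using gA mbA by blast
  have gn: "good M T nu" using gA nuA by blast
  have gbinf: "good M T binf" using gA binfA by blast
  define Einf where "Einf z = -2*lam*Phi M T nu z - Psi M T A2h nu z - Psi M T A2h z nu - P3s z nu + Phi M T binf z" for z
  have Diff: "-2*lam*Phi M T (d N) z - Psi M T A2h (d N) z - Psi M T A2h z (d N) + Phi M T (e N) z = - Einf z"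
    if N: "N \<ge> 1" and z: "z \<in> adm" for N z
  proof -
    have gz: "good M T z" using gA z by blast
    have a1: "Phi M T (d N) z = Phi M T (m N) z - Phi M T nu z" unfolding d_def using Phi_lc1[OF gm[of N] gn gz, of 1 "-1"] by simp
    have a2: "Psi M T A2h (d N) z = Psi M T A2h (m N) z - Psi M T A2h nu z" unfolding d_def using Psi_lc1[OF gm[of N] gn gz K2, of 1 "-1"] by simp
    have a3: "Psi M T A2h z (d N) = Psi M T A2h z (m N) - Psi M T A2h z nu" unfolding d_def using Psi_lc2[OF gm[of N] gn gz K2, of 1 "-1"] by simp
    have a4: "Phi M T (e N) z = Phi M T (mb N) z - Phi M T binf z" unfolding e_def using Phi_lc1[OF gmb[of N] gbinf gz, of 1 "-1"] by simp
    have en: "-2*lam*Phi M T (m N) z - Psi M T A2h (m N) z - Psi M T A2h z (m N) - P3s z nu + Phi M T (mb N) z = 0"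
      by (rule EN[OF N z])
    show ?thesis unfolding a1 a2 a3 a4 Einf_def using en by (simp add: right_diff_distrib)
  qed
  have dfun: "d N = (\<lambda>t \<omega>. (\<Sum>j\<in>{1..N}. v j t \<omega>) / real N - nu t \<omega>)" for N
    unfolding d_def m_def lc_def by simp
  have efun: "e N = (\<lambda>t \<omega>. (\<Sum>j\<in>{1..N}. b j t \<omega>) / real N - binf t \<omega>)" for N
    unfolding e_def mb_def lc_def by simp
  have hnn: "\<And>N. h (real N) \<ge> 0" using assms(11) by simp
  have Phie: "Phi M T (e N) (e N) \<le> h (real N) * T" if N: "N \<ge> 1" for N
  proof -
    have "sqnorm2T M T (e N) \<le> ennreal (h (real N)) * ennreal T"
      by (rule sqnorm_le_const) (use assms(14)[OF N] in \<open>simp add: efun\<close>)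
    hence "ennreal (Phi M T (e N) (e N)) \<le> ennreal (h (real N) * T)"
      using good_sqnorm[OF ge] hnn T0 by (simp add: ennreal_mult)
    thus ?thesis using hnn T0 by (simp add: ennreal_le_iff)
  qed
  define S where "S N = (SUP t\<in>{0..T}. \<integral>\<^sup>+ \<omega>. ennreal (((\<Sum>j\<in>{1..N}. v j t \<omega>) / real N - nu t \<omega>)\<^sup>2) \<partial>M)" for N
  have SL: "S \<longlonglongrightarrow> 0" using LIM unfolding S_def[abs_def] .
  have Phid: "ennreal (Phi M T (d N) (d N)) \<le> ennreal T * S N" for N
  proof -
    have "sqnorm2T M T (d N) \<le> S N * ennreal T"
      unfolding S_def by (rule sqnorm_le_const) (auto simp: dfun intro: SUP_upper)
    thus ?thesis unfolding good_sqnorm[OF gd] by (simp add: mult.commute)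
  qed
  have hlim: "(\<lambda>N. h (real N)) \<longlonglongrightarrow> 0"
    using filterlim_compose[OF assms(13) filterlim_real_sequentially] by simp
  have nd: "(\<lambda>N. nrm (d N)) \<longlonglongrightarrow> 0"
  proof -
    have "(\<lambda>N. ennreal T * S N) \<longlonglongrightarrow> ennreal T * 0"
      by (rule ennreal_tendsto_cmult[OF _ SL]) simp
    hence lim0: "(\<lambda>N. ennreal T * S N) \<longlonglongrightarrow> 0" by simp
    have "(\<lambda>N. ennreal (Phi M T (d N) (d N))) \<longlonglongrightarrow> 0"
      by (rule tendsto_sandwich[OF _ _ tendsto_const lim0]) (simp_all add: Phid)
    hence "(\<lambda>N. Phi M T (d N) (d N)) \<longlonglongrightarrow> 0"
      using tendsto_ennreal_iff[of "\<lambda>N. Phi M T (d N) (d N)" sequentially 0] Phi_self_nonneg by simp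
    hence "(\<lambda>N. sqrt (Phi M T (d N) (d N))) \<longlonglongrightarrow> sqrt 0" by (rule tendsto_real_sqrt)
    thus ?thesis by (simp add: nrm_def)
  qed
  have ne: "(\<lambda>N. nrm (e N)) \<longlonglongrightarrow> 0"
  proof -
    have "(\<lambda>N. h (real N) * T) \<longlonglongrightarrow> 0 * T" by (intro tendsto_mult hlim tendsto_const)
    hence lim0: "(\<lambda>N. h (real N) * T) \<longlonglongrightarrow> 0" by simp
    have ev: "eventually (\<lambda>N. Phi M T (e N) (e N) \<le> h (real N) * T) sequentially"
    proof -
      have "\<forall>N\<ge>1. Phi M T (e N) (e N) \<le> h (real N) * T" using Phie by blast
      thus ?thesis unfolding eventually_sequentially by blast
    qed
    have "(\<lambda>N. Phi M T (e N) (e N)) \<longlonglongrightarrow> 0"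
      by (rule tendsto_sandwich[OF _ ev tendsto_const lim0]) (simp add: Phi_self_nonneg)
    hence "(\<lambda>N. sqrt (Phi M T (e N) (e N))) \<longlonglongrightarrow> sqrt 0" by (rule tendsto_real_sqrt)
    thus ?thesis by (simp add: nrm_def)
  qed
  have Einf0: "Einf z = 0" if z: "z \<in> adm" for z
  proof (rule ccontr)
    assume nz: "Einf z \<noteq> 0"
    have gz: "good M T z" using gA z by blast
    define k2 where "k2 = sqrt (T * K2)"
    have k2: "k2 \<ge> 0" using K2 T0 by (simp add: k2_def KB_def)
    define g where "g N = ((2*lam + 2*k2) * nrm (d N) + nrm (e N)) * nrm z" for N
    have bnd: "\<bar>Einf z\<bar> \<le> g N" if N: "N \<ge> 1" for N
    proof -
      have "\<bar>Einf z\<bar> = \<bar>-2*lam*Phi M T (d N) z - Psi M T A2h (d N) z - Psi M T A2h z (d N) + Phi M T (e N) z\<bar>"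
        using Diff[OF N z] by simp
      also have "\<dots> \<le> 2*lam*\<bar>Phi M T (d N) z\<bar> + \<bar>Psi M T A2h (d N) z\<bar> + \<bar>Psi M T A2h z (d N)\<bar> + \<bar>Phi M T (e N) z\<bar>"
      proof -
        have t: "\<bar>2*lam*Phi M T (d N) z\<bar> = 2*lam*\<bar>Phi M T (d N) z\<bar>" using assms(6) by (simp add: abs_mult)
        have gen: "\<And>a b c d :: real. \<bar>- a - b - c + d\<bar> \<le> \<bar>a\<bar> + \<bar>b\<bar> + \<bar>c\<bar> + \<bar>d\<bar>" by arith
        have "-2*lam*Phi M T (d N) z = - (2*lam*Phi M T (d N) z)" by simp
        thus ?thesis using gen[of "2*lam*Phi M T (d N) z" "Psi M T A2h (d N) z" "Psi M T A2h z (d N)" "Phi M T (e N) z"] t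
          by simp
      qed
      also have "\<dots> \<le> 2*lam*(nrm (d N) * nrm z) + k2 * nrm (d N) * nrm z + k2 * nrm z * nrm (d N) + nrm (e N) * nrm z"
        using Phi_bound[OF gd gz] Psi_bound[OF gd gz K2] Psi_bound[OF gz gd K2] Phi_bound[OF ge gz] assms(6)
        unfolding k2_def by (intro add_mono mult_left_mono) auto
      also have "\<dots> = g N" unfolding g_def by (simp add: algebra_simps)
      finally show ?thesis .
    qed
    have "g \<longlonglongrightarrow> ((2*lam + 2*k2) * 0 + 0) * nrm z"
      unfolding g_def by (intro tendsto_intros nd ne)
    hence "g \<longlonglongrightarrow> 0" by simp
    moreover have "\<bar>Einf z\<bar> > 0" using nz by simp
    ultimately have "eventually (\<lambda>N. g N < \<bar>Einf z\<bar>) sequentially" by (rule order_tendstoD(2))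
    then obtain N0 where "\<And>N. N \<ge> N0 \<Longrightarrow> g N < \<bar>Einf z\<bar>" unfolding eventually_sequentially by blast
    hence "g (max N0 1) < \<bar>Einf z\<bar>" by simp
    moreover have "\<bar>Einf z\<bar> \<le> g (max N0 1)" by (rule bnd) simp
    ultimately show False by simp
  qed
  have rate: "nrm (d N) \<le> sqrt (h (real N) * T) / (2 * lam)" if N: "N \<ge> 1" for N
  proof -
    have "-2*lam*Phi M T (d N) (d N) - Psi M T A2h (d N) (d N) - Psi M T A2h (d N) (d N) + Phi M T (e N) (d N) = 0"
      using Diff[OF N dA[of N]] Einf0[OF dA[of N]] by simp
    moreover have "0 \<le> Psi M T A2h (d N) (d N)" by (rule Psi_nonneg[OF assms(7) gd])
    moreover have "Phi M T (e N) (d N) \<le> nrm (e N) * nrm (d N)" using Phi_bound[OF ge[of N] gd[of N]] by simp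
    ultimately have "2*lam*(nrm (d N))\<^sup>2 \<le> nrm (e N) * nrm (d N)" by (simp add: nrm_sq)
    hence a: "2*lam*nrm (d N) \<le> nrm (e N) \<or> nrm (d N) = 0"
      using nrm_nonneg[of "d N"] by (auto simp: power2_eq_square mult.assoc[symmetric] mult_le_cancel_right)
    have b: "nrm (e N) \<le> sqrt (h (real N) * T)" unfolding nrm_def using Phie[OF N] by simp
    have c: "0 \<le> sqrt (h (real N) * T) / (2 * lam)" using hnn T0 assms(6) by simp
    show ?thesis
    proof (cases "nrm (d N) = 0")
      case True thus ?thesis using c by simp
    next
      case False
      hence "2*lam*nrm (d N) \<le> sqrt (h (real N) * T)" using a b by simp
      thus ?thesis using assms(6) by (simp add: field_simps)
    qed
  qed
  define Bs where "Bs = enn2real (SUP u\<in>Ub. sqnorm2T M T u)"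
  define B where "B = sqrt Bs"
  have Bs0: "Bs \<ge> 0" by (simp add: Bs_def)
  have B0: "B \<ge> 0" using Bs0 by (simp add: B_def)
  have gU: "\<And>u. u \<in> Ub \<Longrightarrow> good M T u" using assms(16) gA unfolding adm_def by blast
  have nU: "nrm u \<le> B" if u: "u \<in> Ub" for u
  proof -
    have "ennreal (Phi M T u u) = sqnorm2T M T u" using good_sqnorm[OF gU[OF u]] by simp
    hence "Phi M T u u = enn2real (sqnorm2T M T u)" using Phi_self_nonneg[of u] by (metis enn2real_ennreal)
    also have "\<dots> \<le> Bs" unfolding Bs_def
      by (rule enn2real_mono) (use u assms(18) in \<open>auto intro: SUP_upper\<close>)
    finally show ?thesis unfolding nrm_def B_def by simp
  qed
  have vU: "\<And>j. j \<ge> 1 \<Longrightarrow> v j \<in> Ub" using assms(17) by simp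
  define k1 where "k1 = sqrt (T * K1)"
  define k3 where "k3 = sqrt (T * K3)"
  define k4 where "k4 = sqrt (T * K4)"
  have k1: "k1 \<ge> 0" using K1 T0 by (simp add: k1_def KB_def)
  have k3: "k3 \<ge> 0" using K3 T0 by (simp add: k3_def KB_def)
  have k4: "k4 \<ge> 0" using K4 T0 by (simp add: k4_def KB_def)
  define nb0 where "nb0 = nrm (b 0)"
  have nb0: "nb0 \<ge> 0" by (simp add: nb0_def nrm_nonneg)
  define C1 where "C1 = 8*k1*B\<^sup>2 + 2*(k3+k4)*B\<^sup>2 + 2*nb0*B"
  define C2 where "C2 = (k3+k4)*B* sqrt T / lam"
  have C1: "C1 \<ge> 0" unfolding C1_def using k1 k3 k4 nb0 B0 by simp
  have C2: "C2 \<ge> 0" unfolding C2_def using k3 k4 B0 assms(6) T0 by simp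
  have P3s_bound: "\<bar>P3s x y\<bar> \<le> (k3+k4) * nrm x * nrm y" if "good M T x" "good M T y" for x y
    using Psi_bound[OF that K3] Psi_bound[OF that K4] unfolding P3s_def k3_def k4_def
    by (simp add: algebra_simps)
  have main: "JN M T A1 lam A2h A3 b c N i u v \<le> JN M T A1 lam A2h A3 b c N i (v i) v + (C1 + C2) * max (sqrt (h (real N))) (1 / real N)"
    if N2: "N \<ge> 2" and i: "i \<in> {1..N}" and u: "u \<in> Ub" for N i u
  proof -
    have i1: "i \<ge> 1" and N1: "N \<ge> 1" using i N2 by auto
    have uA: "u \<in> adm" using u assms(16) unfolding adm_def by blast
    have gu: "good M T u" by (rule gU[OF u])
    have gvi: "good M T (v i)" using gA vA i1 by blast
    have gb0: "good M T (b 0)" and gbi: "good M T (b i)" using gA bA by auto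
    define \<delta> where "\<delta> = lc (1/real N) u (-1/real N) (v i)"
    define au where "au = (\<lambda>t \<omega>. (u t \<omega> + (\<Sum>j\<in>{1..N}-{i}. v j t \<omega>)) / real N)"
    define w where "w = lc 1 u (-1) (v i)"
    have gdl: "good M T \<delta>" unfolding \<delta>_def by (rule good_lc[OF gu gvi])
    have gw: "good M T w" unfolding w_def by (rule good_lc[OF gu gvi])
    have sumrem: "(\<Sum>j\<in>{1..N}. v j t \<omega>) = v i t \<omega> + (\<Sum>j\<in>{1..N}-{i}. v j t \<omega>)" for t \<omega>
      using sum.remove[of "{1..N}" i "\<lambda>j. v j t \<omega>"] i by simp
    have au_eq: "au = lc 1 (m N) 1 \<delta>"
      unfolding au_def m_def \<delta>_def lc_def sumrem by (simp add: fun_eq_iff add_divide_distrib diff_divide_distrib)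
    have av_eq: "(\<lambda>t \<omega>. (v i t \<omega> + (\<Sum>j\<in>{1..N}-{i}. v j t \<omega>)) / real N) = m N"
      unfolding m_def sumrem ..
    have gau: "good M T au" unfolding au_eq by (rule good_lc[OF gm gdl])
    have JNu: "JN M T A1 lam A2h A3 b c N i u v = - Psi M T A1 au au - (lam * Phi M T u u + Psi M T A2h u u) - P3s u au
       + Phi M T (b i) u + Phi M T (b 0) au + (\<integral>\<omega>. c i \<omega> \<partial>M)"
      unfolding JN_def au_def[symmetric] P3s_def by (rule Jexp[OF gu gau gbi gb0 assms(9)[OF i1] K1 K2 K3 K4])
    have JNv: "JN M T A1 lam A2h A3 b c N i (v i) v = - Psi M T A1 (m N) (m N) - (lam * Phi M T (v i) (v i) + Psi M T A2h (v i) (v i)) - P3s (v i) (m N)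
       + Phi M T (b i) (v i) + Phi M T (b 0) (m N) + (\<integral>\<omega>. c i \<omega> \<partial>M)"
      unfolding JN_def av_eq P3s_def by (rule Jexp[OF gvi gm gbi gb0 assms(9)[OF i1] K1 K2 K3 K4])
    have NEi: "Jinf M T A1 lam A2h A3 b c i u nu \<le> Jinf M T A1 lam A2h A3 b c i (v i) nu" by (rule NE[OF i1 uA])
    have x1: "Psi M T A1 au au = Psi M T A1 (m N) au + Psi M T A1 \<delta> au"
      using Psi_lc1[OF gm[of N] gdl gau K1, of 1 1] au_eq by simp
    have x2: "Psi M T A1 (m N) au = Psi M T A1 (m N) (m N) + Psi M T A1 (m N) \<delta>"
      using Psi_lc2[OF gm[of N] gdl gm[of N] K1, of 1 1] au_eq by simp
    have x3: "P3s u au = P3s u (m N) + P3s u \<delta>"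
      using Psi_lc2[OF gm[of N] gdl gu K3, of 1 1] Psi_lc2[OF gm[of N] gdl gu K4, of 1 1] au_eq
      unfolding P3s_def by simp
    have x4: "Phi M T (b 0) au = Phi M T (b 0) (m N) + Phi M T (b 0) \<delta>"
      using Phi_lc2[OF gm[of N] gdl gb0, of 1 1] au_eq by simp
    have y1: "P3s w (d N) = P3s u (d N) - P3s (v i) (d N)"
      using Psi_lc1[OF gu gvi gd[of N] K3, of 1 "-1"] Psi_lc1[OF gu gvi gd[of N] K4, of 1 "-1"]
      unfolding P3s_def w_def by simp
    have y2: "P3s u (d N) = P3s u (m N) - P3s u nu"
      using Psi_lc2[OF gm[of N] gn gu K3, of 1 "-1"] Psi_lc2[OF gm[of N] gn gu K4, of 1 "-1"]
      unfolding P3s_def d_def by simp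
    have y3: "P3s (v i) (d N) = P3s (v i) (m N) - P3s (v i) nu"
      using Psi_lc2[OF gm[of N] gn gvi K3, of 1 "-1"] Psi_lc2[OF gm[of N] gn gvi K4, of 1 "-1"]
      unfolding P3s_def d_def by simp
    have ident: "JN M T A1 lam A2h A3 b c N i u v - JN M T A1 lam A2h A3 b c N i (v i) v =
      (Jinf M T A1 lam A2h A3 b c i u nu - Jinf M T A1 lam A2h A3 b c i (v i) nu)
      - Psi M T A1 (m N) \<delta> - Psi M T A1 \<delta> au - P3s u \<delta> - P3s w (d N) + Phi M T (b 0) \<delta>"
      unfolding JNu JNv JinfE[OF i1 uA] JinfE[OF i1 vA[OF i1]] x1 x2 x3 x4 y1 y2 y3
      by (simp add: algebra_simps)
    have rN: "real N \<ge> 1" using N1 by simp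
    have nu': "nrm u \<le> B" by (rule nU[OF u])
    have nvi: "nrm (v i) \<le> B" by (rule nU[OF vU[OF i1]])
    have nd': "nrm \<delta> \<le> 2*B/real N"
    proof -
      have eq: "\<delta> = lc 1 (lc (1/real N) u 0 u) 1 (lc (-1/real N) (v i) 0 (v i))"
        unfolding \<delta>_def lc_def by simp
      have "nrm \<delta> \<le> nrm (lc (1/real N) u 0 u) + nrm (lc (-1/real N) (v i) 0 (v i))"
        unfolding eq by (rule nrm_tri[OF good_lc[OF gu gu] good_lc[OF gvi gvi]])
      also have "\<dots> = nrm u / real N + nrm (v i) / real N"
        using nrm_scale[OF gu, of "1/real N"] nrm_scale[OF gvi, of "-1/real N"] by simp
      also have "\<dots> \<le> B / real N + B / real N"
        using nu' nvi rN by (intro add_mono divide_right_mono) auto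
      finally show ?thesis by simp
    qed
    have nm: "nrm (m N) \<le> B" unfolding m_def
      by (rule nrm_avg) (use nU vU rN B0 gU in auto)
    have nau: "nrm au \<le> 3*B"
    proof -
      have "nrm au \<le> nrm (m N) + nrm \<delta>" unfolding au_eq by (rule nrm_tri[OF gm gdl])
      also have "\<dots> \<le> B + 2*B/real N" using nm nd' by simp
      also have "2*B/real N \<le> 2*B" using rN B0 by (simp add: field_simps mult_left_mono)
      finally show ?thesis by simp
    qed
    have nw: "nrm w \<le> 2*B"
    proof -
      have eq: "w = lc 1 u 1 (lc (-1) (v i) 0 (v i))" unfolding w_def lc_def by simp
      have "nrm w \<le> nrm u + nrm (lc (-1) (v i) 0 (v i))" unfolding eq by (rule nrm_tri[OF gu good_lc[OF gvi gvi]])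
      also have "\<dots> = nrm u + nrm (v i)" using nrm_scale[OF gvi, of "-1"] by simp
      finally show ?thesis using nu' nvi by simp
    qed
    define R where "R = sqrt (h (real N) * T) / (2 * lam)"
    have ndN: "nrm (d N) \<le> R" unfolding R_def by (rule rate[OF N1])
    have d0: "0 \<le> 2*B/real N" using B0 by simp
    have t1: "\<bar>Psi M T A1 (m N) \<delta>\<bar> \<le> k1 * B * (2*B/real N)"
      using Psi_bound[OF gm[of N] gdl K1] mono3[OF k1 nrm_nonneg nm nrm_nonneg nd'] unfolding k1_def by linarith
    have t2: "\<bar>Psi M T A1 \<delta> au\<bar> \<le> k1 * (2*B/real N) * (3*B)"
      using Psi_bound[OF gdl gau K1] mono3[OF k1 nrm_nonneg nd' nrm_nonneg nau] unfolding k1_def by linarith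
    have t3: "\<bar>P3s u \<delta>\<bar> \<le> (k3+k4) * B * (2*B/real N)"
      using P3s_bound[OF gu gdl] mono3[of "k3+k4", OF _ nrm_nonneg nu' nrm_nonneg nd'] k3 k4 by linarith
    have t4: "\<bar>P3s w (d N)\<bar> \<le> (k3+k4) * (2*B) * R"
      using P3s_bound[OF gw gd[of N]] mono3[of "k3+k4", OF _ nrm_nonneg nw nrm_nonneg ndN] k3 k4 by linarith
    have t5: "\<bar>Phi M T (b 0) \<delta>\<bar> \<le> nb0 * (2*B/real N)"
      using Phi_bound[OF gb0 gdl] mult_left_mono[OF nd' nb0] unfolding nb0_def by linarith
    have "JN M T A1 lam A2h A3 b c N i u v - JN M T A1 lam A2h A3 b c N i (v i) v
       \<le> k1 * B * (2*B/real N) + k1 * (2*B/real N) * (3*B) + (k3+k4) * B * (2*B/real N) + (k3+k4) * (2*B) * R + nb0 * (2*B/real N)"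
      unfolding ident using NEi t1 t2 t3 t4 t5 by linarith
    also have "\<dots> = C1 * (1 / real N) + C2 * sqrt (h (real N))"
      unfolding C1_def C2_def R_def using assms(6) T0 hnn rN
      by (simp add: real_sqrt_mult field_simps power2_eq_square)
    also have "\<dots> \<le> C1 * max (sqrt (h (real N))) (1 / real N) + C2 * max (sqrt (h (real N))) (1 / real N)"
      using C1 C2 by (intro add_mono mult_left_mono) auto
    finally show ?thesis by (simp add: algebra_simps)
  qed
  show ?thesis
  proof (intro exI[of _ "C1 + C2 + 1"] conjI allI impI ballI)
    show "C1 + C2 + 1 > 0" using C1 C2 by simp
    fix N i assume N2: "N \<ge> (2::nat)" and i: "i \<in> {1..N}"
    show "ereal (JN M T A1 lam A2h A3 b c N i (v i) v) \<le> (SUP u\<in>Ub. ereal (JN M T A1 lam A2h A3 b c N i u v))"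
      by (rule SUP_upper) (use vU i in auto)
    show "(SUP u\<in>Ub. ereal (JN M T A1 lam A2h A3 b c N i u v))
      \<le> ereal (JN M T A1 lam A2h A3 b c N i (v i) v + (C1 + C2 + 1) * max (sqrt (h (real N))) (1 / real N))"
    proof (rule SUP_least)
      fix u assume u: "u \<in> Ub"
      have "0 \<le> max (sqrt (h (real N))) (1 / real N)" by (rule order_trans[OF _ max.cobounded2]) simp
      hence "(C1 + C2) * max (sqrt (h (real N))) (1 / real N) \<le> (C1 + C2 + 1) * max (sqrt (h (real N))) (1 / real N)"
        by (simp add: mult_right_mono)
      thus "ereal (JN M T A1 lam A2h A3 b c N i u v) \<le> ereal (JN M T A1 lam A2h A3 b c N i (v i) v + (C1 + C2 + 1) * max (sqrt (h (real N))) (1 / real N))"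
        using main[OF N2 i u] by simp
    qed
  qed
qed

end
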